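(* For every $\varepsilon>0$ there is a constant $C_\varepsilon$ (depending only on $\varepsilon$) such that for every $n$-state NFA $\mathcal{A}=(\Sigma,Q,I,F,\delta)$ and every symbol $a\in\Sigma$, $$\|\mathcal{A}\|\le C_\varepsilon\,|\Sigma|\,\bigl(c(\mathcal{G}(T^{(a)}))+n^2\bigr)\max_{b\in\Sigma\setminus\{a\}}2^{\operatorname{rank}(T^{(b)})^2/(4-\varepsilon)},$$ i.e., $\|\mathcal{A}\|\in O\!\left(|\Sigma|(c(\mathcal{G}(T^{(a)}))+n^2)\max_{b\in\Sigma\setminus\{a\}}2^{\operatorname{rank}(T^{(b)})^2/(4-\varepsilon)}\right)$.
   Context: An NFA is $\mathcal{A}=(\Sigma,Q,I,F,\delta)$ with finite alphabet $\Sigma$, state set $Q=\{q_1,\dots,q_n\}$, transitions $\delta\subseteq Q\times\Sigma\times Q$ ($\varepsilon$-free). Over the Boolean semifield $\mathbb{B}=(\{0,1\},\vee,\wedge,0,1)$, the transition matrix $T^{(w)}\in\mathbb{B}^{n\times n}$ has $T^{(w)}_{i,j}=1$ iff $(q_i,w,q_j)\in\delta$. The range $\mathcal{R}(T)=\{Tv:v\in\mathbb{B}^n\}$. For $\mathcal{J}\subseteq\Sigma$, $\mathcal{M}(\mathcal{J})$ is the monoid generated by $\{T^{(w)}:w\in\mathcal{J}\}$ under Boolean matrix multiplication (containing the identity). The subset complexity is $\|\mathcal{A}\|=\min_{\mathcal{J}\subseteq\Sigma}\bigl(1+\sum_{w\in\Sigma\setminus\mathcal{J}}|\mathcal{R}(T^{(w)})|\bigr)|\mathcal{M}(\mathcal{J})|$.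 $\operatorname{rank}(T)$ is the rank of the 0/1 matrix $T$ over the field $\mathbb{F}_2$. The precedence graph $\mathcal{G}(A)$ of an $n\times n$ Boolean matrix $A$ is the directed graph on vertices $\{1,\dots,n\}$ with an edge $i\to j$ iff $A_{i,j}=1$. The cyclicity of a strongly connected component is the greatest common divisor of the lengths of all its cycles, and the cyclicity $c(\mathcal{G})$ of a directed graph is the least common multiple of the cyclicities of its maximal strongly connected components that contain at least one cycle. *)

theory Defs
  imports "HOL-Library.Z2" "Jordan_Normal_Form.DL_Rank"
begin

text \<open>Boolean n x n matrices are functions nat => nat => bool whose entries
  outside {0..<n} x {0..<n} are False; states of an n-state NFA are 0..n-1.\<close>

type_synonym bmat = "nat \<Rightarrow> nat \<Rightarrow> bool"

definition bmult :: "nat \<Rightarrow> bmat \<Rightarrow> bmat \<Rightarrow> bmat" where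
  "bmult n A B = (\<lambda>i j. \<exists>k<n. A i k \<and> B k j)"

definition bid :: "nat \<Rightarrow> bmat" where
  "bid n = (\<lambda>i j. i = j \<and> i < n)"

inductive_set bmonoid :: "nat \<Rightarrow> bmat set \<Rightarrow> bmat set" for n G where
  unit: "bid n \<in> bmonoid n G"
| step: "A \<in> bmonoid n G \<Longrightarrow> g \<in> G \<Longrightarrow> bmult n A g \<in> bmonoid n G"

definition brange :: "nat \<Rightarrow> bmat \<Rightarrow> (nat \<Rightarrow> bool) set" where
  "brange n T = {(\<lambda>i. \<exists>j<n. T i j \<and> v j) | v. \<forall>j. v j \<longrightarrow> j < n}"

definition nfa :: "nat \<Rightarrow> 'a set \<Rightarrow> nat set \<Rightarrow> nat set \<Rightarrow> (nat \<times> 'a \<times> nat) set \<Rightarrow> bool" where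
  "nfa n \<Sigma> I F \<delta> \<longleftrightarrow> finite \<Sigma> \<and> I \<subseteq> {..<n} \<and> F \<subseteq> {..<n} \<and> \<delta> \<subseteq> {..<n} \<times> \<Sigma> \<times> {..<n}"

definition trans_mat :: "(nat \<times> 'a \<times> nat) set \<Rightarrow> 'a \<Rightarrow> bmat" where
  "trans_mat \<delta> w = (\<lambda>i j. (i, w, j) \<in> \<delta>)"

definition subset_complexity :: "nat \<Rightarrow> 'a set \<Rightarrow> (nat \<times> 'a \<times> nat) set \<Rightarrow> nat" where
  "subset_complexity n \<Sigma> \<delta> =
     Min ((\<lambda>J. (1 + (\<Sum>w\<in>\<Sigma> - J. card (brange n (trans_mat \<delta> w))))
                 * card (bmonoid n (trans_mat \<delta> ` J))) ` Pow \<Sigma>)"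

definition to_F2_mat :: "nat \<Rightarrow> bmat \<Rightarrow> bit mat" where
  "to_F2_mat n T = mat n n (\<lambda>(i, j). if T i j then 1 else 0)"

definition rank_F2 :: "nat \<Rightarrow> bmat \<Rightarrow> nat" where
  "rank_F2 n T = vec_space.rank n (to_F2_mat n T)"

definition prec_edges :: "nat \<Rightarrow> bmat \<Rightarrow> (nat \<times> nat) set" where
  "prec_edges n A = {(i, j). i < n \<and> j < n \<and> A i j}"

definition sccs :: "nat \<Rightarrow> bmat \<Rightarrow> nat set set" where
  "sccs n A = (\<lambda>i. {j. (i, j) \<in> (prec_edges n A)\<^sup>* \<and> (j, i) \<in> (prec_edges n A)\<^sup>*}) ` {..<n}"

definition cycle_lengths :: "nat \<Rightarrow> bmat \<Rightarrow> nat set \<Rightarrow> nat set" where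
  "cycle_lengths n A C = {length vs | vs. vs \<noteq> [] \<and> distinct vs \<and> set vs \<subseteq> C \<and>
      (\<forall>k<length vs. (vs ! k, vs ! ((k + 1) mod length vs)) \<in> prec_edges n A)}"

definition cyclicity :: "nat \<Rightarrow> bmat \<Rightarrow> nat" where
  "cyclicity n A = Lcm {Gcd (cycle_lengths n A C) | C. C \<in> sccs n A \<and> cycle_lengths n A C \<noteq> {}}"

end

theory Submission
  imports Defs
begin


lemma semi_mult:
  assumes S0: "0 \<in> S" and Sadd: "\<forall>x\<in>S. \<forall>y\<in>S. x + y \<in> S" and x: "(x::nat) \<in> S"
  shows "x * q \<in> S"
proof (induction q)
  case 0 then show ?case using S0 by simp
next
  case (Suc q) then show ?case using Sadd x by (simp add: add.commute)
qed

lemma semi_core: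
  fixes S :: "nat set" and N :: nat
  assumes S0: "0 \<in> S" and Sadd: "\<forall>x\<in>S. \<forall>y\<in>S. x + y \<in> S"
  shows "finite G \<Longrightarrow> G \<noteq> {} \<Longrightarrow> G \<subseteq> S \<Longrightarrow> 0 \<notin> G \<Longrightarrow> (\<forall>x\<in>G. x \<le> N) \<Longrightarrow>
    \<exists>a\<in>G. \<forall>m. Gcd G dvd m \<and> N * (a div Gcd G) \<le> m \<longrightarrow> m \<in> S"
proof (induction G rule: finite_ne_induct)
  case (singleton a)
  show ?case
  proof (intro bexI allI impI)
    fix m assume "Gcd {a} dvd m \<and> N * (a div Gcd {a}) \<le> m"
    then obtain q where "m = a * q" by auto
    then show "m \<in> S" using semi_mult[OF S0 Sadd] singleton by auto
  qed simp
next
  case (insert b G')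
  from insert.IH insert.prems obtain a where aG: "a \<in> G'"
    and IH: "\<forall>m. Gcd G' dvd m \<and> N * (a div Gcd G') \<le> m \<longrightarrow> m \<in> S" by auto
  define g' where "g' = Gcd G'"
  define g where "g = gcd b g'"
  have gG: "Gcd (insert b G') = g" by (simp add: g_def g'_def)
  have a0: "a \<noteq> 0" using aG insert.prems by (metis insert_iff)
  have b0: "b \<noteq> 0" using insert.prems by auto
  have g'a: "g' dvd a" using aG by (simp add: g'_def)
  have g'0: "g' \<noteq> 0" using g'a a0 by auto
  have gg': "g dvd g'" by (simp add: g_def)
  have gb: "g dvd b" by (simp add: g_def)
  have g0: "g \<noteq> 0" using g'0 gg' by auto
  define \<alpha> where "\<alpha> = a div g'"
  define \<rho> where "\<rho> = g' div g"
  have a_eq: "a = g' * \<alpha>" using g'a by (simp add: \<alpha>_def)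
  have g'_eq: "g' = g * \<rho>" using gg' by (simp add: \<rho>_def)
  have \<alpha>1: "\<alpha> \<ge> 1" using a_eq a0 by (cases \<alpha>) auto
  have \<rho>1: "\<rho> \<ge> 1" using g'_eq g'0 by (cases \<rho>) auto
  have adivg: "a div g = \<alpha> * \<rho>" using a_eq g'_eq g0 by (simp add: mult.commute mult.left_commute)
  have bN: "b \<le> N" using insert.prems by auto
  show ?case
  proof (intro bexI[OF _ insertI2[OF aG]] allI impI)
    fix m assume m: "Gcd (insert b G') dvd m \<and> N * (a div Gcd (insert b G')) \<le> m"
    then have gm: "g dvd m" and mN: "N * (\<alpha> * \<rho>) \<le> m" using gG adivg by auto
    obtain \<mu> where m_eq: "m = g * \<mu>" using gm by auto
    obtain u v :: int where uv: "u * int b + v * int g' = int g"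
      using bezout_int[of "int b" "int g'"] by (auto simp: g_def gcd_int_int_eq)
    define t where "t = nat ((u * int \<mu>) mod int \<rho>)"
    have t_lt: "t < \<rho>" using \<rho>1 by (simp add: t_def nat_less_iff)
    have tmod: "int t = (u * int \<mu>) mod int \<rho>" using \<rho>1 by (simp add: t_def)
    define k where "k = (u * int \<mu>) div int \<rho>"
    have k: "u * int \<mu> = int \<rho> * k + int t"
      unfolding tmod k_def using div_mult_mod_eq[of "u * int \<mu>" "int \<rho>"] by (simp only: mult.commute)
    obtain \<beta> where b_eq: "b = g * \<beta>" using gb by auto
    have e1: "int g - u * int b = v * int g'" using uv by linarith
    have e2: "int \<rho> * int b = int g' * int \<beta>" using b_eq g'_eq by (simp add: algebra_simps)
    have e3: "int \<rho> * k * int b = int g' * (k * int \<beta>)"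
    proof -
      have "int \<rho> * k * int b = k * (int \<rho> * int b)" by (simp add: algebra_simps)
      also have "\<dots> = k * (int g' * int \<beta>)" by (simp only: e2)
      finally show ?thesis by (simp add: algebra_simps)
    qed
    have "int m - int t * int b = int g * int \<mu> - (u * int \<mu> - int \<rho> * k) * int b"
      using k m_eq by simp
    also have "\<dots> = int \<mu> * (int g - u * int b) + int \<rho> * k * int b" by (simp add: algebra_simps)
    also have "\<dots> = int g' * (int \<mu> * v + k * int \<beta>)"
      unfolding e1 e3 by (simp add: algebra_simps)
    finally have dv: "int g' dvd int m - int t * int b" by simp
    have tb: "t * b \<le> N * (\<rho> - 1)"
    proof -
      have "t \<le> \<rho> - 1" using t_lt by simp
      then have "t * b \<le> (\<rho> - 1) * N" using bN by (rule mult_le_mono)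
      then show ?thesis by (simp only: mult.commute)
    qed
    have key: "N * (\<rho> - 1) + N * \<alpha> \<le> N * (\<alpha> * \<rho>)"
    proof -
      have r1: "\<rho> - 1 \<le> \<alpha> * (\<rho> - 1)" using \<alpha>1 by simp
      have r2: "\<alpha> * \<rho> = \<alpha> * (\<rho> - 1) + \<alpha>" using \<rho>1 by (cases \<rho>) simp_all
      have "(\<rho> - 1) + \<alpha> \<le> \<alpha> * \<rho>" using r1 r2 by linarith
      then have "N * ((\<rho> - 1) + \<alpha>) \<le> N * (\<alpha> * \<rho>)" by (rule mult_le_mono2)
      then show ?thesis by (simp only: distrib_left)
    qed
    have tbm: "t * b \<le> m" using tb key mN by linarith
    have "g' dvd m - t * b"
    proof -
      have "int (m - t * b) = int m - int t * int b" using tbm by simp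
      then have "int g' dvd int (m - t * b)" using dv by simp
      then show ?thesis by (simp only: int_dvd_int_iff)
    qed
    moreover have "N * (a div Gcd G') \<le> m - t * b"
    proof -
      have "a div Gcd G' = \<alpha>" by (simp add: \<alpha>_def g'_def)
      moreover have "N * \<alpha> \<le> m - t * b" using tb key mN tbm by linarith
      ultimately show ?thesis by simp
    qed
    ultimately have mS: "m - t * b \<in> S" using IH unfolding g'_def by blast
    have "t * b \<in> S"
    proof -
      have "b \<in> S" using insert.prems by auto
      then have "b * t \<in> S" by (rule semi_mult[OF S0 Sadd])
      then show ?thesis by (simp only: mult.commute)
    qed
    then have "(m - t * b) + t * b \<in> S" using Sadd mS by blast
    then show "m \<in> S" using tbm by simp
  qed
qed

lemma semigroup_bound:
  fixes S G :: "nat set" and N :: nat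
  assumes S0: "0 \<in> S" and Sadd: "\<forall>x\<in>S. \<forall>y\<in>S. x + y \<in> S"
    and "finite G" "G \<noteq> {}" "G \<subseteq> S" "0 \<notin> G" "\<forall>x\<in>G. x \<le> N"
    and m: "Gcd G dvd m" "N * N \<le> m"
  shows "m \<in> S"
proof -
  obtain a where aG: "a \<in> G" and H: "\<forall>m. Gcd G dvd m \<and> N * (a div Gcd G) \<le> m \<longrightarrow> m \<in> S"
    using semi_core[OF S0 Sadd assms(3-7)] by blast
  have "a div Gcd G \<le> a" by (rule div_le_dividend)
  moreover have "a \<le> N" using aG assms(7) by blast
  ultimately have "a div Gcd G \<le> N" by (rule le_trans)
  then have "N * (a div Gcd G) \<le> N * N" by (rule mult_le_mono2)
  then have "N * (a div Gcd G) \<le> m" using m(2) by linarith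
  then show ?thesis using H m(1) by blast
qed



definition vadd :: "(nat \<Rightarrow> bit) \<Rightarrow> (nat \<Rightarrow> bit) \<Rightarrow> (nat \<Rightarrow> bit)" where
  "vadd x y = (\<lambda>l. x l + y l)"

definition vzero :: "nat \<Rightarrow> bit" where "vzero = (\<lambda>l. 0)"

definition FS :: "nat set \<Rightarrow> (nat \<Rightarrow> bit) set" where
  "FS J = {x. \<forall>l. l \<notin> J \<longrightarrow> x l = 0}"

definition subsp :: "nat set \<Rightarrow> (nat \<Rightarrow> bit) set \<Rightarrow> bool" where
  "subsp J W \<longleftrightarrow> vzero \<in> W \<and> (\<forall>x\<in>W. \<forall>y\<in>W. vadd x y \<in> W) \<and> W \<subseteq> FS J"

definition SubK :: "nat set \<Rightarrow> nat \<Rightarrow> (nat \<Rightarrow> bit) set set" where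
  "SubK J k = {W. subsp J W \<and> card W = 2 ^ k}"

lemma bit_add_self[simp]: "(a::bit) + a = 0"
  using bit.nchotomy[rule_format, of a] by auto

lemma bit_cancel: "(a::bit) + (a + b) = b"
proof -
  have "a + (a + b) = (a + a) + b" by (rule add.assoc[symmetric])
  also have "\<dots> = b" by (simp only: bit_add_self add_0_left)
  finally show ?thesis .
qed

lemma vadd_self[simp]: "vadd x (vadd x y) = y"
  unfolding vadd_def by (rule ext) (rule bit_cancel)

lemma vadd_comm: "vadd x y = vadd y x"
  unfolding vadd_def by (rule ext) (rule add.commute)

lemma vadd_assoc: "vadd (vadd x y) z = vadd x (vadd y z)"
  unfolding vadd_def by (rule ext) (rule add.assoc)

lemma vadd_zero[simp]: "vadd x vzero = x" "vadd vzero x = x"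
  unfolding vadd_def vzero_def by (rule ext, simp only: add_0_right add_0_left)+

lemma vadd_xx[simp]: "vadd x x = vzero"
  unfolding vadd_def vzero_def by (rule ext) (rule bit_add_self)

lemma inj_vadd: "inj (vadd w)"
  by (metis injI vadd_self)

lemma card_vadd[simp]: "card (vadd w ` A) = card A"
  by (rule card_image) (metis inj_vadd inj_on_subset subset_UNIV)

lemma finite_vadd[simp]: "finite (vadd w ` A) \<longleftrightarrow> finite A"
  by (rule finite_image_iff) (metis inj_vadd inj_on_subset subset_UNIV)

lemma bit_ne0: "(b::bit) \<noteq> 0 \<longleftrightarrow> b = 1"
  using bit.nchotomy by auto

lemma card_FS: assumes "finite J" shows "card (FS J) = 2 ^ card J"
proof -
  let ?f = "\<lambda>S l. if l \<in> S then (1::bit) else 0"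
  have "FS J = ?f ` Pow J"
  proof
    show "FS J \<subseteq> ?f ` Pow J"
    proof
      fix x assume x: "x \<in> FS J"
      have "x = ?f {l. x l = 1}"
        by (rule ext) (use bit.nchotomy in auto)
      moreover have "{l. x l = 1} \<in> Pow J" using x by (auto simp: FS_def)
      ultimately show "x \<in> ?f ` Pow J" by blast
    qed
  qed (auto simp: FS_def)
  moreover have "inj_on ?f (Pow J)"
  proof (rule inj_onI)
    fix S T assume "S \<in> Pow J" "T \<in> Pow J" "?f S = ?f T"
    then show "S = T" by (metis (mono_tags, lifting) one_neq_zero subsetI subset_antisym)
  qed
  ultimately show ?thesis using assms by (simp add: card_image card_Pow)
qed

lemma finite_FS: assumes "finite J" shows "finite (FS J)"
  using card_FS[OF assms] by (metis card.infinite power_not_zero zero_neq_numeral)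

lemma finite_SubK: assumes "finite J" shows "finite (SubK J k)"
proof -
  have "SubK J k \<subseteq> Pow (FS J)" by (auto simp: SubK_def subsp_def)
  then show ?thesis using finite_FS[OF assms] by (meson finite_Pow_iff finite_subset)
qed

lemma subsp_W0:
  assumes "subsp (insert p J) W"
  shows "subsp J {x\<in>W. x p = 0}"
  using assms unfolding subsp_def FS_def vadd_def vzero_def by auto

lemma W1_eq:
  assumes "subsp J W" "w \<in> W" "w p = 1"
  shows "{x\<in>W. x p = 1} = vadd w ` {x\<in>W. x p = 0}"
proof
  show "{x\<in>W. x p = 1} \<subseteq> vadd w ` {x\<in>W. x p = 0}"
  proof
    fix x assume x: "x \<in> {x\<in>W. x p = 1}"
    then have "vadd w x \<in> W" using assms unfolding subsp_def by auto
    moreover have "vadd w x p = 0" using x assms by (simp add: vadd_def)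
    moreover have "x = vadd w (vadd w x)" by simp
    ultimately show "x \<in> vadd w ` {x\<in>W. x p = 0}" by blast
  qed
next
  show "vadd w ` {x\<in>W. x p = 0} \<subseteq> {x\<in>W. x p = 1}"
    using assms unfolding subsp_def by (auto simp: vadd_def)
qed

lemma subsp_card:
  assumes "finite J"
  shows "subsp J W \<Longrightarrow> finite W \<and> (\<exists>k\<le>card J. card W = 2 ^ k)"
  using assms
proof (induction J arbitrary: W rule: finite_induct)
  case empty
  then have "W = {vzero}" unfolding subsp_def FS_def vzero_def by (force simp: fun_eq_iff)
  then show ?case by simp
next
  case (insert p J)
  let ?W0 = "{x\<in>W. x p = 0}"
  have s0: "subsp J ?W0" using subsp_W0[OF insert.prems(1)] .
  from insert.IH[OF s0] obtain k where fin0: "finite ?W0" and k: "k \<le> card J" "card ?W0 = 2 ^ k"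
    by auto
  show ?case
  proof (cases "\<forall>x\<in>W. x p = 0")
    case True
    then have "W = ?W0" by auto
    then show ?thesis using fin0 k insert.hyps by (metis card_insert_disjoint le_SucI)
  next
    case False
    then obtain w where w: "w \<in> W" "w p = 1" using bit_ne0 by auto
    have W1: "{x\<in>W. x p = 1} = vadd w ` ?W0" using W1_eq[OF insert.prems(1) w] .
    have Wsplit: "?W0 \<union> {x\<in>W. x p = 1} = W" using bit_ne0 by blast
    have fin1: "finite {x\<in>W. x p = 1}" using W1 fin0 by simp
    have c1: "card {x\<in>W. x p = 1} = card ?W0"
      using W1 by simp
    have "card (?W0 \<union> {x\<in>W. x p = 1}) = card ?W0 + card {x\<in>W. x p = 1}"
      by (rule card_Un_disjoint[OF fin0 fin1]) auto
    then have "card W = card ?W0 + card {x\<in>W. x p = 1}" unfolding Wsplit .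
    then have "card W = 2 ^ Suc k" using c1 k by simp
    moreover have "Suc k \<le> card (insert p J)" using k insert.hyps by simp
    moreover have "finite (?W0 \<union> {x\<in>W. x p = 1})" using fin0 fin1 by simp
    then have "finite W" unfolding Wsplit .
    ultimately show ?thesis by blast
  qed
qed


lemma split_card:
  assumes "subsp J W" "w \<in> W" "w p = 1" "finite {x\<in>W. x p = 0}"
  shows "card W = 2 * card {x\<in>W. x p = 0}" "finite W"
proof -
  let ?W0 = "{x\<in>W. x p = 0}"
  have W1: "{x\<in>W. x p = 1} = vadd w ` ?W0" using W1_eq[OF assms(1-3)] .
  have Wsplit: "?W0 \<union> {x\<in>W. x p = 1} = W" using bit_ne0 by blast
  have fin1: "finite {x\<in>W. x p = 1}" using W1 assms(4) by simp
  have c1: "card {x\<in>W. x p = 1} = card ?W0"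
    using W1 by simp
  have "card (?W0 \<union> {x\<in>W. x p = 1}) = card ?W0 + card {x\<in>W. x p = 1}"
    by (rule card_Un_disjoint[OF assms(4) fin1]) auto
  then have "card W = card ?W0 + card {x\<in>W. x p = 1}" unfolding Wsplit .
  then show "card W = 2 * card ?W0" using c1 by simp
  have "finite (?W0 \<union> {x\<in>W. x p = 1})" using assms(4) fin1 by simp
  then show "finite W" unfolding Wsplit .
qed

lemma SubK_big: assumes "finite J" "card J < k" shows "SubK J k = {}"
proof (rule ccontr)
  assume "SubK J k \<noteq> {}"
  then obtain W where W: "subsp J W" "card W = 2 ^ k" by (auto simp: SubK_def)
  from subsp_card[OF assms(1) W(1)] obtain k' where "k' \<le> card J" "card W = 2 ^ k'" by auto
  then show False using W assms by (metis leD order.strict_trans1 power_inject_exp one_less_numeral_iff semiring_norm(76))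
qed

lemma coset_eq:
  assumes "subsp J W0" "x1 \<in> W0" "x2 \<in> W0" "vadd w1 x1 = vadd w2 x2"
  shows "vadd w1 ` W0 = vadd w2 ` W0"
proof -
  have sub: "\<And>w1 w2 x1 x2. x1 \<in> W0 \<Longrightarrow> x2 \<in> W0 \<Longrightarrow> vadd w1 x1 = vadd w2 x2 \<Longrightarrow>
      vadd w2 ` W0 \<subseteq> vadd w1 ` W0"
  proof
    fix w1 w2 x1 x2 y assume h: "x1 \<in> W0" "x2 \<in> W0" "vadd w1 x1 = vadd w2 x2" "y \<in> vadd w2 ` W0"
    then obtain x where x: "x \<in> W0" "y = vadd w2 x" by auto
    have w2: "w2 = vadd w1 (vadd x1 x2)"
      using h(3) by (metis vadd_assoc vadd_comm vadd_self)
    have "y = vadd w1 (vadd (vadd x1 x2) x)" using x w2 by (simp add: vadd_assoc)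
    moreover have "vadd (vadd x1 x2) x \<in> W0" using assms(1) h x unfolding subsp_def by auto
    ultimately show "y \<in> vadd w1 ` W0" by blast
  qed
  show ?thesis using sub[OF assms(2-4)] sub[OF assms(3,2) assms(4)[symmetric]] by blast
qed

definition Fp :: "nat \<Rightarrow> nat set \<Rightarrow> (nat \<Rightarrow> bit) set" where
  "Fp p J = {w \<in> FS (insert p J). w p = 1}"

definition Cos :: "nat \<Rightarrow> nat set \<Rightarrow> (nat \<Rightarrow> bit) set \<Rightarrow> (nat \<Rightarrow> bit) set set" where
  "Cos p J W0 = (\<lambda>w. vadd w ` W0) ` Fp p J"

lemma card_Fp: assumes "finite J" "p \<notin> J" shows "card (Fp p J) = 2 ^ card J" "finite (Fp p J)"
proof -
  define ep where "ep = (\<lambda>l. if l = p then (1::bit) else 0)"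
  have "Fp p J = vadd ep ` FS J"
  proof
    show "Fp p J \<subseteq> vadd ep ` FS J"
    proof
      fix x assume x: "x \<in> Fp p J"
      have "vadd ep x \<in> FS J" using x by (auto simp: Fp_def FS_def vadd_def ep_def)
      moreover have "x = vadd ep (vadd ep x)" by simp
      ultimately show "x \<in> vadd ep ` FS J" by blast
    qed
    show "vadd ep ` FS J \<subseteq> Fp p J" using assms(2) by (auto simp: Fp_def FS_def vadd_def ep_def)
  qed
  then show "card (Fp p J) = 2 ^ card J" "finite (Fp p J)"
    using card_FS[OF assms(1)] finite_FS[OF assms(1)] by simp_all
qed

lemma card_Cos:
  assumes "finite J" "p \<notin> J" "W0 \<in> SubK J j"
  shows "card (Cos p J W0) = 2 ^ (card J - j)" "finite (Cos p J W0)"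
proof -
  have s: "subsp J W0" and cW: "card W0 = 2 ^ j" using assms(3) by (auto simp: SubK_def)
  have finW0: "finite W0" using subsp_card[OF assms(1) s] by auto
  show fin: "finite (Cos p J W0)" unfolding Cos_def using card_Fp(2)[OF assms(1,2)] by simp
  have U: "\<Union> (Cos p J W0) = Fp p J"
  proof
    show "\<Union> (Cos p J W0) \<subseteq> Fp p J"
      using s assms(2) unfolding Cos_def Fp_def subsp_def FS_def by (auto simp: vadd_def)
    show "Fp p J \<subseteq> \<Union> (Cos p J W0)"
    proof
      fix w assume "w \<in> Fp p J"
      moreover have "w \<in> vadd w ` W0" using s unfolding subsp_def by (metis image_eqI vadd_zero(1))
      ultimately show "w \<in> \<Union> (Cos p J W0)" unfolding Cos_def by blast
    qed
  qed
  have "2 ^ j * card (Cos p J W0) = card (\<Union> (Cos p J W0))"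
  proof (rule card_partition[OF fin])
    show "finite (\<Union> (Cos p J W0))" using U card_Fp(2)[OF assms(1,2)] by simp
    show "\<And>c. c \<in> Cos p J W0 \<Longrightarrow> card c = 2 ^ j"
      unfolding Cos_def using cW by auto
    show "\<And>c1 c2. c1 \<in> Cos p J W0 \<Longrightarrow> c2 \<in> Cos p J W0 \<Longrightarrow> c1 \<noteq> c2 \<Longrightarrow> c1 \<inter> c2 = {}"
    proof -
      fix c1 c2 assume "c1 \<in> Cos p J W0" "c2 \<in> Cos p J W0" "c1 \<noteq> c2"
      then obtain w1 w2 where c: "c1 = vadd w1 ` W0" "c2 = vadd w2 ` W0" unfolding Cos_def by auto
      show "c1 \<inter> c2 = {}"
      proof (rule ccontr)
        assume "c1 \<inter> c2 \<noteq> {}"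
        then obtain x1 x2 where "x1 \<in> W0" "x2 \<in> W0" "vadd w1 x1 = vadd w2 x2" using c by auto
        then have "c1 = c2" using coset_eq[OF s] c by metis
        then show False using \<open>c1 \<noteq> c2\<close> by simp
      qed
    qed
  qed
  then have eq: "2 ^ j * card (Cos p J W0) = 2 ^ card J" using U card_Fp(1)[OF assms(1,2)] by simp
  have "j \<le> card J" using assms(1) assms(3) SubK_big by (metis empty_iff not_le)
  then have "(2::nat) ^ card J = 2 ^ j * 2 ^ (card J - j)" by (simp add: power_add[symmetric])
  then show "card (Cos p J W0) = 2 ^ (card J - j)" using eq by simp
qed


lemma SubK_step:
  assumes fin: "finite J" and p: "p \<notin> J"
  shows "card (SubK (insert p J) k) \<le> card (SubK J k) +
           (if k = 0 then 0 else card (SubK J (k - 1)) * 2 ^ (card J - (k - 1)))"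
proof -
  define SA where "SA = {W \<in> SubK (insert p J) k. \<forall>x\<in>W. x p = 0}"
  define SB where "SB = {W \<in> SubK (insert p J) k. \<not> (\<forall>x\<in>W. x p = 0)}"
  have finI: "finite (insert p J)" using fin by simp
  have split: "SubK (insert p J) k = SA \<union> SB" unfolding SA_def SB_def by auto
  have finA: "finite SA" "finite SB" using finite_SubK[OF finI] unfolding SA_def SB_def by auto
  have A: "SA \<subseteq> SubK J k"
  proof
    fix W assume W: "W \<in> SA"
    then have "W = {x\<in>W. x p = 0}" unfolding SA_def by auto
    moreover have "subsp J {x\<in>W. x p = 0}" using W subsp_W0 unfolding SA_def SubK_def by auto
    ultimately show "W \<in> SubK J k" using W unfolding SA_def SubK_def by auto
  qed
  have cA: "card SA \<le> card (SubK J k)" using A finite_SubK[OF fin] by (rule card_mono[rotated])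
  define \<phi> where "\<phi> = (\<lambda>W::(nat\<Rightarrow>bit) set. ({x\<in>W. x p = 0}, {x\<in>W. x p = 1}))"
  have inj: "inj_on \<phi> SB"
  proof (rule inj_onI)
    fix W V assume e: "\<phi> W = \<phi> V"
    have "W = {x\<in>W. x p = 0} \<union> {x\<in>W. x p = 1}" using bit_ne0 by blast
    also have "\<dots> = {x\<in>V. x p = 0} \<union> {x\<in>V. x p = 1}" using e unfolding \<phi>_def by simp
    also have "\<dots> = V" using bit_ne0 by blast
    finally show "W = V" .
  qed
  have B: "k \<noteq> 0 \<Longrightarrow> \<phi> ` SB \<subseteq> Sigma (SubK J (k - 1)) (Cos p J)"
  proof
    fix z assume k0: "k \<noteq> 0" and "z \<in> \<phi> ` SB"
    then obtain W where W: "W \<in> SB" "z = \<phi> W" by auto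
    have sW: "subsp (insert p J) W" and cW: "card W = 2 ^ k" using W unfolding SB_def SubK_def by auto
    obtain w where w: "w \<in> W" "w p = 1" using W(1) bit_ne0 unfolding SB_def by auto
    have s0: "subsp J {x\<in>W. x p = 0}" using subsp_W0[OF sW] .
    have f0: "finite {x\<in>W. x p = 0}" using subsp_card[OF fin s0] by auto
    have "card W = 2 * card {x\<in>W. x p = 0}" using split_card[OF sW w f0] by simp
    then have "card {x\<in>W. x p = 0} = 2 ^ (k - 1)" using cW k0 by (cases k) auto
    then have in0: "{x\<in>W. x p = 0} \<in> SubK J (k - 1)" using s0 unfolding SubK_def by auto
    have "w \<in> Fp p J" using sW w unfolding subsp_def Fp_def by auto
    then have "{x\<in>W. x p = 1} \<in> Cos p J {x\<in>W. x p = 0}"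
      unfolding Cos_def using W1_eq[OF sW w] by blast
    then show "z \<in> Sigma (SubK J (k - 1)) (Cos p J)" using in0 W(2) unfolding \<phi>_def by auto
  qed
  have cB: "card SB \<le> (if k = 0 then 0 else card (SubK J (k - 1)) * 2 ^ (card J - (k - 1)))"
  proof (cases "k = 0")
    case True
    have "SB = {}"
    proof (rule ccontr)
      assume "SB \<noteq> {}"
      then obtain W where W: "W \<in> SB" by auto
      have sW: "subsp (insert p J) W" and cW: "card W = 2 ^ k" using W unfolding SB_def SubK_def by auto
      obtain w where w: "w \<in> W" "w p = 1" using W(1) bit_ne0 unfolding SB_def by auto
      have s0: "subsp J {x\<in>W. x p = 0}" using subsp_W0[OF sW] .
      have f0: "finite {x\<in>W. x p = 0}" using subsp_card[OF fin s0] by auto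
      have "card W = 2 * card {x\<in>W. x p = 0}" using split_card[OF sW w f0] by simp
      then show False using cW True by simp
    qed
    then show ?thesis by simp
  next
    case False
    have finS: "finite (Sigma (SubK J (k - 1)) (Cos p J))"
      using finite_SubK[OF fin] card_Cos(2)[OF fin p] by auto
    have "card SB = card (\<phi> ` SB)" using inj by (simp add: card_image)
    also have "\<dots> \<le> card (Sigma (SubK J (k - 1)) (Cos p J))"
      using B[OF False] finS by (rule card_mono[rotated])
    also have "\<dots> = (\<Sum>W0\<in>SubK J (k - 1). card (Cos p J W0))"
      using finite_SubK[OF fin] card_Cos(2)[OF fin p] by (simp add: card_SigmaI)
    also have "\<dots> = (\<Sum>W0\<in>SubK J (k - 1). 2 ^ (card J - (k - 1)))"
      using card_Cos(1)[OF fin p] by (rule sum.cong[OF refl])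
    also have "\<dots> = card (SubK J (k - 1)) * 2 ^ (card J - (k - 1))" by simp
    finally show ?thesis using False by simp
  qed
  have "card (SubK (insert p J) k) \<le> card SA + card SB"
    using split card_Un_le by metis
  then show ?thesis using cA cB by linarith
qed

lemma SubK_bound:
  assumes "finite J"
  shows "k \<le> card J \<Longrightarrow> card (SubK J k) \<le> 2 ^ (k * (card J - k) + card J)"
  using assms
proof (induction J arbitrary: k rule: finite_induct)
  case empty
  then have k0: "k = 0" by simp
  have "SubK {} 0 \<subseteq> {{vzero}}"
    unfolding SubK_def subsp_def FS_def vzero_def by (force simp: fun_eq_iff)
  then have "card (SubK {} 0) \<le> card {{vzero}}" by (rule card_mono[rotated]) simp
  then have "card (SubK {} 0) \<le> 1" by simp
  then show ?case using k0 by simp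
next
  case (insert p J)
  define r where "r = card J"
  have cI: "card (insert p J) = Suc r" using insert.hyps by (simp add: r_def)
  have st: "card (SubK (insert p J) k) \<le> card (SubK J k) +
           (if k = 0 then 0 else card (SubK J (k - 1)) * 2 ^ (r - (k - 1)))"
    unfolding r_def by (rule SubK_step[OF insert.hyps(1,2)])
  have kr: "k \<le> Suc r" using insert.prems cI by simp
  show ?case
  proof (cases "k = 0")
    case True
    have "card (SubK J 0) \<le> 2 ^ (0 * (r - 0) + r)" using insert.IH[of 0] by (simp add: r_def)
    then have "card (SubK (insert p J) k) \<le> 2 ^ r" using st True by simp
    also have "\<dots> \<le> 2 ^ (k * (card (insert p J) - k) + card (insert p J))"
      by (rule power_increasing) (simp_all add: cI)
    finally show ?thesis .
  next
    case False
    then obtain j where kj: "k = Suc j" by (cases k) auto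
    have jr: "j \<le> r" using kr kj by simp
    have IHj: "card (SubK J j) \<le> 2 ^ (j * (r - j) + r)" using insert.IH[of j] jr by (simp add: r_def)
    define E where "E = k * (Suc r - k) + r"
    have target: "k * (card (insert p J) - k) + card (insert p J) = Suc E" using cI by (simp add: E_def)
    have second: "card (SubK J j) * 2 ^ (r - j) \<le> 2 ^ E"
    proof -
      have "card (SubK J j) * 2 ^ (r - j) \<le> 2 ^ (j * (r - j) + r) * 2 ^ (r - j)"
        using IHj by simp
      also have "\<dots> = 2 ^ (j * (r - j) + r + (r - j))" by (simp add: power_add)
      also have "j * (r - j) + r + (r - j) = E"
      proof -
        have "Suc r - k = r - j" using kj by simp
        then have "E = Suc j * (r - j) + r" using kj by (simp add: E_def)
        then show ?thesis by simp
      qed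
      finally show ?thesis by simp
    qed
    have first: "card (SubK J k) \<le> 2 ^ E"
    proof (cases "k \<le> r")
      case True
      have "card (SubK J k) \<le> 2 ^ (k * (r - k) + r)" using insert.IH[of k] True by (simp add: r_def)
      also have "\<dots> \<le> 2 ^ E"
      proof (rule power_increasing)
        have "r - k \<le> Suc r - k" by simp
        then have "k * (r - k) \<le> k * (Suc r - k)" by (rule mult_le_mono2)
        then show "k * (r - k) + r \<le> E" by (simp add: E_def)
      qed simp
      finally show ?thesis .
    next
      case False
      then have "SubK J k = {}" using SubK_big[OF insert.hyps(1)] by (simp add: r_def)
      then show ?thesis by simp
    qed
    have "card (SubK (insert p J) k) \<le> card (SubK J k) + card (SubK J j) * 2 ^ (r - j)"
      using st kj by simp
    also have "\<dots> \<le> 2 ^ E + 2 ^ E" using first second by linarith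
    also have "\<dots> = 2 ^ Suc E" by simp
    finally show ?thesis using target by simp
  qed
qed



definition pth :: "nat \<Rightarrow> bmat \<Rightarrow> (nat \<Rightarrow> nat) \<Rightarrow> nat \<Rightarrow> bool" where
  "pth n A f m \<longleftrightarrow> (\<forall>k\<le>m. f k < n) \<and> (\<forall>k<m. A (f k) (f (Suc k)))"

definition bnd :: "nat \<Rightarrow> bmat \<Rightarrow> bool" where
  "bnd n A \<longleftrightarrow> (\<forall>i j. A i j \<longrightarrow> i < n \<and> j < n)"

definition bpow :: "nat \<Rightarrow> bmat \<Rightarrow> nat \<Rightarrow> bmat" where
  "bpow n A m = ((\<lambda>X. bmult n X A) ^^ m) (bid n)"

lemma bpow_0: "bpow n A 0 = bid n" by (simp add: bpow_def)
lemma bpow_Suc: "bpow n A (Suc m) = bmult n (bpow n A m) A" by (simp add: bpow_def)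

lemma pth_cat:
  assumes "pth n A f m1" "pth n A g m2" "f m1 = g 0"
  shows "pth n A (\<lambda>k. if k \<le> m1 then f k else g (k - m1)) (m1 + m2)"
  unfolding pth_def
proof (intro conjI allI impI)
  fix k assume "k \<le> m1 + m2"
  then show "(if k \<le> m1 then f k else g (k - m1)) < n" using assms unfolding pth_def by auto
next
  fix k assume k: "k < m1 + m2"
  show "A (if k \<le> m1 then f k else g (k - m1)) (if Suc k \<le> m1 then f (Suc k) else g (Suc k - m1))"
  proof (cases "Suc k \<le> m1")
    case True then show ?thesis using assms(1) unfolding pth_def by auto
  next
    case False
    show ?thesis
    proof (cases "k = m1")
      case True
      then show ?thesis using assms k unfolding pth_def by auto
    next
      case False2: False
      then have "k - m1 < m2" "Suc k - m1 = Suc (k - m1)" using False k by auto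
      then show ?thesis using assms(2) False False2 unfolding pth_def by auto
    qed
  qed
qed

lemma pth_sub:
  assumes "pth n A f m" "a \<le> b" "b \<le> m"
  shows "pth n A (\<lambda>k. f (a + k)) (b - a)"
  using assms unfolding pth_def by auto

lemma pth_cut:
  assumes "pth n A f m" "s < t" "t \<le> m" "f s = f t"
  shows "pth n A (\<lambda>k. if k \<le> s then f k else f (k + (t - s))) (m - (t - s))"
  unfolding pth_def
proof (intro conjI allI impI)
  fix k assume "k \<le> m - (t - s)"
  then show "(if k \<le> s then f k else f (k + (t - s))) < n" using assms unfolding pth_def by auto
next
  fix k assume k: "k < m - (t - s)"
  show "A (if k \<le> s then f k else f (k + (t - s))) (if Suc k \<le> s then f (Suc k) else f (Suc k + (t - s)))"
  proof (cases "Suc k \<le> s")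
    case True then show ?thesis using assms unfolding pth_def by auto
  next
    case False
    show ?thesis
    proof (cases "k = s")
      case True
      have "A (f t) (f (Suc t))" using assms k True unfolding pth_def by auto
      then show ?thesis using True assms(2,4) by (simp add: Suc_diff_le)
    next
      case False2: False
      have "A (f (k + (t - s))) (f (Suc (k + (t - s))))" using assms k unfolding pth_def by auto
      then show ?thesis using False False2 by simp
    qed
  qed
qed

lemma bpow_pth:
  assumes "bnd n A"
  shows "bpow n A m i j \<longleftrightarrow> (\<exists>f. pth n A f m \<and> f 0 = i \<and> f m = j)"
proof (induction m arbitrary: j)
  case 0
  show ?case
  proof
    assume "bpow n A 0 i j"
    then have "i = j" "i < n" by (auto simp: bpow_0 bid_def)
    then show "\<exists>f. pth n A f 0 \<and> f 0 = i \<and> f 0 = j" by (intro exI[of _ "\<lambda>_. i"]) (simp add: pth_def)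
  next
    assume "\<exists>f. pth n A f 0 \<and> f 0 = i \<and> f 0 = j"
    then show "bpow n A 0 i j" by (auto simp: bpow_0 bid_def pth_def)
  qed
next
  case (Suc m)
  show ?case
  proof
    assume "bpow n A (Suc m) i j"
    then obtain k where k: "k < n" "bpow n A m i k" "A k j" by (auto simp: bpow_Suc bmult_def)
    then obtain f where f: "pth n A f m" "f 0 = i" "f m = k" using Suc.IH by blast
    have jn: "j < n" using k(3) assms by (auto simp: bnd_def)
    have "pth n A (f(Suc m := j)) (Suc m)"
      using f k jn unfolding pth_def by (auto simp: less_Suc_eq le_Suc_eq)
    then show "\<exists>f. pth n A f (Suc m) \<and> f 0 = i \<and> f (Suc m) = j" using f by (intro exI) auto
  next
    assume "\<exists>f. pth n A f (Suc m) \<and> f 0 = i \<and> f (Suc m) = j"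
    then obtain f where f: "pth n A f (Suc m)" "f 0 = i" "f (Suc m) = j" by blast
    have "pth n A f m" using f(1) unfolding pth_def by auto
    then have "bpow n A m i (f m)" using Suc.IH f by blast
    moreover have "f m < n" "A (f m) j" using f unfolding pth_def by auto
    ultimately show "bpow n A (Suc m) i j" by (auto simp: bpow_Suc bmult_def)
  qed
qed

lemma pigeon_pair:
  fixes f :: "nat \<Rightarrow> nat"
  assumes "finite S" "card S > n * D" "\<forall>k\<in>S. f k < n" "D > 0"
  shows "\<exists>s\<in>S. \<exists>t\<in>S. s < t \<and> f s = f t \<and> s mod D = t mod D"
proof -
  let ?g = "\<lambda>k. (f k, k mod D)"
  have "?g ` S \<subseteq> {..<n} \<times> {..<D}" using assms by auto
  then have "card (?g ` S) \<le> n * D" by (metis card_lessThan card_cartesian_product card_mono finite_SigmaI finite_lessThan)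
  then have "\<not> inj_on ?g S" using assms(2) pigeonhole by (metis leD le_less_trans)
  then obtain s t where st: "s \<in> S" "t \<in> S" "s \<noteq> t" "?g s = ?g t" unfolding inj_on_def by blast
  show ?thesis
  proof (cases "s < t")
    case True then show ?thesis using st by auto
  next
    case False then have ts: "t < s" using st(3) by simp
    have "f t = f s" "t mod D = s mod D" using st(4) by auto
    then show ?thesis using ts st(1,2) by blast
  qed
qed

lemma shorten:
  assumes "0 < D"
  shows "pth n A f m \<Longrightarrow> p \<le> m \<Longrightarrow>
    \<exists>g m' p'. pth n A g m' \<and> g 0 = f 0 \<and> g m' = f m \<and> p' \<le> m' \<and> g p' = f p \<and>
       m' mod D = m mod D \<and> m' \<le> 2 * n * D"
proof (induction m arbitrary: f p rule: less_induct)
  case (less m)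
  show ?case
  proof (cases "m \<le> 2 * n * D")
    case True
    then show ?thesis using less.prems by blast
  next
    case False
    have fn: "\<forall>k\<le>m. f k < n" using less.prems(1) unfolding pth_def by auto
    obtain s t where st: "s < t" "t \<le> m" "f s = f t" "s mod D = t mod D" and pos: "t \<le> p \<or> p \<le> s"
    proof (cases "n * D \<le> p")
      case True
      have "card {0..p} > n * D" using True by simp
      then obtain s t where "s \<in> {0..p}" "t \<in> {0..p}" "s < t" "f s = f t" "s mod D = t mod D"
        using pigeon_pair[of "{0..p}" n D f] fn less.prems(2) assms by auto
      then show thesis using that less.prems(2) by auto
    next
      case False2: False
      have "card {p..m} > n * D" using False False2 by simp
      then obtain s t where "s \<in> {p..m}" "t \<in> {p..m}" "s < t" "f s = f t" "s mod D = t mod D"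
        using pigeon_pair[of "{p..m}" n D f] fn assms by auto
      then show thesis using that by auto
    qed
    define f' where "f' = (\<lambda>k. if k \<le> s then f k else f (k + (t - s)))"
    define m' where "m' = m - (t - s)"
    have p': "pth n A f' m'" unfolding f'_def m'_def using pth_cut[OF less.prems(1) st(1-3)] .
    have mm: "m' < m" using st by (simp add: m'_def)
    define q where "q = (if t \<le> p then p - (t - s) else p)"
    have q: "q \<le> m'" "f' q = f p"
    proof -
      show "q \<le> m'" using pos st less.prems(2) by (auto simp: q_def m'_def)
      show "f' q = f p"
      proof (cases "t \<le> p")
        case True
        show ?thesis
        proof (cases "p = t")
          case True
          then show ?thesis using st by (auto simp: q_def f'_def)
        next
          case False
          then have "\<not> p - (t - s) \<le> s" "p - (t - s) + (t - s) = p" using \<open>t \<le> p\<close> st by auto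
          then show ?thesis using \<open>t \<le> p\<close> by (simp add: q_def f'_def)
        qed
      next
        case False
        then show ?thesis using pos by (auto simp: q_def f'_def)
      qed
    qed
    have ends: "f' 0 = f 0" "f' m' = f m"
    proof -
      show "f' 0 = f 0" by (simp add: f'_def)
      show "f' m' = f m"
      proof (cases "m = t")
        case True then show ?thesis using st by (auto simp: f'_def m'_def)
      next
        case False
        then have "\<not> m' \<le> s" "m' + (t - s) = m" using st by (auto simp: m'_def)
        then show ?thesis by (simp add: f'_def)
      qed
    qed
    have "D dvd t - s" using mod_eq_dvd_iff_nat[of s t D] st(1,4) by simp
    then have dvd: "(t - s) mod D = 0" by simp
    have mod: "m' mod D = m mod D"
    proof -
      have "m = m' + (t - s)" using st by (simp add: m'_def)
      then show ?thesis using dvd by (metis mod_add_right_eq add_0_right)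
    qed
    from less.IH[OF mm p' q(1)] obtain g m'' p'' where
      "pth n A g m''" "g 0 = f' 0" "g m'' = f' m'" "p'' \<le> m''" "g p'' = f' q"
      "m'' mod D = m' mod D" "m'' \<le> 2 * n * D" by blast
    then show ?thesis using ends q mod by metis
  qed
qed



lemma pth_join:
  assumes "pth n A f m1" "pth n A g m2" "f m1 = g 0"
  shows "\<exists>h. pth n A h (m1 + m2) \<and> h 0 = f 0 \<and> h (m1 + m2) = g m2"
proof -
  let ?h = "\<lambda>k. if k \<le> m1 then f k else g (k - m1)"
  have "pth n A ?h (m1 + m2)" using pth_cat[OF assms] .
  moreover have "?h 0 = f 0" by simp
  moreover have "?h (m1 + m2) = g m2" using assms(3) by (cases m2) auto
  ultimately show ?thesis by blast
qed

definition CW :: "nat \<Rightarrow> bmat \<Rightarrow> nat \<Rightarrow> nat set" where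
  "CW n A v = {m. \<exists>f. pth n A f m \<and> f 0 = v \<and> f m = v}"

definition cyc :: "nat \<Rightarrow> bmat \<Rightarrow> nat \<Rightarrow> bool" where
  "cyc n A v \<longleftrightarrow> v < n \<and> (\<exists>m>0. m \<in> CW n A v)"

definition GV :: "nat \<Rightarrow> bmat \<Rightarrow> nat \<Rightarrow> nat set" where
  "GV n A v = {m \<in> CW n A v. 0 < m \<and> m \<le> 5 * n}"

definition DV :: "nat \<Rightarrow> bmat \<Rightarrow> nat \<Rightarrow> nat" where
  "DV n A v = Gcd (GV n A v)"

definition scc :: "nat \<Rightarrow> bmat \<Rightarrow> nat \<Rightarrow> nat set" where
  "scc n A v = {j. (v, j) \<in> (prec_edges n A)\<^sup>* \<and> (j, v) \<in> (prec_edges n A)\<^sup>*}"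

lemma CW_add: assumes "a \<in> CW n A v" "b \<in> CW n A v" shows "a + b \<in> CW n A v"
proof -
  obtain f g where f: "pth n A f a" "f 0 = v" "f a = v" and g: "pth n A g b" "g 0 = v" "g b = v"
    using assms unfolding CW_def by blast
  obtain h where "pth n A h (a + b)" "h 0 = f 0" "h (a + b) = g b" using pth_join[OF f(1) g(1)] f g by auto
  then show ?thesis using f g unfolding CW_def by auto
qed

lemma CW_0: "v < n \<Longrightarrow> 0 \<in> CW n A v"
  unfolding CW_def pth_def by (intro CollectI exI[of _ "\<lambda>_. v"]) auto

lemma reach_pth:
  assumes "(i, j) \<in> (prec_edges n A)\<^sup>*" "i < n"
  shows "\<exists>m f. pth n A f m \<and> f 0 = i \<and> f m = j"
  using assms(1)
proof (induction rule: rtrancl_induct)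
  case base
  show ?case using assms(2) by (intro exI[of _ 0] exI[of _ "\<lambda>_. i"]) (simp add: pth_def)
next
  case (step j k)
  then obtain m f where f: "pth n A f m" "f 0 = i" "f m = j" by blast
  have e: "j < n" "k < n" "A j k" using step(2) by (auto simp: prec_edges_def)
  have "pth n A (f(Suc m := k)) (Suc m)"
    using f e unfolding pth_def by (auto simp: less_Suc_eq le_Suc_eq)
  moreover have "(f(Suc m := k)) 0 = i" "(f(Suc m := k)) (Suc m) = k" using f by auto
  ultimately show ?case by blast
qed

lemma pth_reach:
  "pth n A f m \<Longrightarrow> (f 0, f m) \<in> (prec_edges n A)\<^sup>*"
proof (induction m)
  case 0 then show ?case by simp
next
  case (Suc m)
  have "pth n A f m" using Suc.prems unfolding pth_def by auto
  then have "(f 0, f m) \<in> (prec_edges n A)\<^sup>*" using Suc.IH by blast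
  moreover have "(f m, f (Suc m)) \<in> prec_edges n A"
    using Suc.prems unfolding pth_def prec_edges_def by auto
  ultimately show ?case by simp
qed

lemma pth_reach_sub:
  assumes "pth n A f m" "a \<le> b" "b \<le> m"
  shows "(f a, f b) \<in> (prec_edges n A)\<^sup>*"
  using pth_reach[OF pth_sub[OF assms]] assms by simp

lemma short_reach:
  assumes "(i, j) \<in> (prec_edges n A)\<^sup>*" "i < n"
  shows "\<exists>m f. pth n A f m \<and> f 0 = i \<and> f m = j \<and> m \<le> 2 * n"
proof -
  obtain m f where f: "pth n A f m" "f 0 = i" "f m = j" using reach_pth[OF assms] by blast
  from shorten[of 1 n A f m 0] f obtain g m' where "pth n A g m'" "g 0 = f 0" "g m' = f m" "m' \<le> 2 * n * 1"
    by fastforce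
  then show ?thesis using f by auto
qed

lemma cycle_exists:
  "pth n A f m \<Longrightarrow> 0 < m \<Longrightarrow> f 0 = f m \<Longrightarrow>
   \<exists>vs. vs \<noteq> [] \<and> distinct vs \<and> set vs \<subseteq> f ` {..m} \<and>
     (\<forall>k<length vs. (vs ! k, vs ! ((k + 1) mod length vs)) \<in> prec_edges n A)"
proof (induction m arbitrary: f rule: less_induct)
  case (less m)
  show ?case
  proof (cases "inj_on f {..<m}")
    case True
    let ?vs = "map f [0..<m]"
    have h1: "?vs \<noteq> []" using less.prems by simp
    have h2: "distinct ?vs" using True by (simp add: distinct_map atLeast0LessThan)
    have h3: "set ?vs \<subseteq> f ` {..m}" by auto
    have h4: "\<forall>k<length ?vs. (?vs ! k, ?vs ! ((k + 1) mod length ?vs)) \<in> prec_edges n A"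
    proof (intro allI impI)
      fix k assume k: "k < length ?vs"
      then have km: "k < m" by simp
      have e: "f k < n" "f (Suc k) < n" "A (f k) (f (Suc k))" using less.prems(1) km unfolding pth_def by auto
      show "(?vs ! k, ?vs ! ((k + 1) mod length ?vs)) \<in> prec_edges n A"
      proof (cases "Suc k < m")
        case True
        then show ?thesis using e km by (simp add: prec_edges_def)
      next
        case False
        then have "Suc k = m" using km by simp
        then show ?thesis using e km less.prems(3) by (simp add: prec_edges_def)
      qed
    qed
    show ?thesis by (intro exI[of _ ?vs] conjI) (rule h1, rule h2, rule h3, rule h4)
  next
    case False
    then obtain s t where st0: "s < m" "t < m" "s \<noteq> t" "f s = f t" unfolding inj_on_def by auto
    obtain s t where st: "s < t" "t < m" "f s = f t"
    proof (cases "s < t")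
      case True then show thesis using that st0 by blast
    next
      case False then show thesis using that[of t s] st0 by auto
    qed
    have p: "pth n A (\<lambda>k. f (s + k)) (t - s)" using pth_sub[OF less.prems(1), of s t] st by simp
    have lt: "t - s < m" and pos: "0 < t - s" using st by auto
    have eq: "(\<lambda>k. f (s + k)) 0 = (\<lambda>k. f (s + k)) (t - s)" using st by simp
    from less.IH[OF lt p pos eq] obtain vs where vs: "vs \<noteq> []" "distinct vs"
      "set vs \<subseteq> (\<lambda>k. f (s + k)) ` {..t - s}"
      "\<forall>k<length vs. (vs ! k, vs ! ((k + 1) mod length vs)) \<in> prec_edges n A"
      by blast
    have "(\<lambda>k. f (s + k)) ` {..t - s} \<subseteq> f ` {..m}"
    proof
      fix y assume "y \<in> (\<lambda>k. f (s + k)) ` {..t - s}"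
      then obtain k where k: "k \<le> t - s" "y = f (s + k)" by auto
      moreover have "s + k \<le> m" using k(1) st by linarith
      ultimately show "y \<in> f ` {..m}" by auto
    qed
    then have "set vs \<subseteq> f ` {..m}" using vs(3) by (rule subset_trans[rotated])
    then show ?thesis by (intro exI[of _ vs] conjI) (rule vs(1), rule vs(2), assumption, rule vs(4))
  qed
qed

lemma scc_mem:
  assumes "pth n A f m" "f 0 = v" "f m = v" "k \<le> m"
  shows "f k \<in> scc n A v"
proof -
  have "(f 0, f k) \<in> (prec_edges n A)\<^sup>*" using pth_reach_sub[OF assms(1), of 0 k] assms(4) by simp
  moreover have "(f k, f m) \<in> (prec_edges n A)\<^sup>*" using pth_reach_sub[OF assms(1), of k m] assms(4) by simp
  ultimately show ?thesis unfolding scc_def using assms(2,3) by simp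
qed

lemma scc_in_sccs: "v < n \<Longrightarrow> scc n A v \<in> sccs n A"
  unfolding scc_def sccs_def by (rule image_eqI[of _ _ v]) simp_all

lemma cyc_cycle: assumes "cyc n A v" shows "cycle_lengths n A (scc n A v) \<noteq> {}"
proof -
  obtain m f where f: "0 < m" "pth n A f m" "f 0 = v" "f m = v" using assms unfolding cyc_def CW_def by auto
  obtain vs where vs: "vs \<noteq> []" "distinct vs" "set vs \<subseteq> f ` {..m}"
     "\<forall>k<length vs. (vs ! k, vs ! ((k + 1) mod length vs)) \<in> prec_edges n A"
    using cycle_exists[OF f(2,1) trans[OF f(3) f(4)[symmetric]]] by blast
  have "set vs \<subseteq> scc n A v" using vs(3) scc_mem[OF f(2-4)] by auto
  then have "length vs \<in> cycle_lengths n A (scc n A v)"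
    unfolding cycle_lengths_def using vs by blast
  then show ?thesis by blast
qed

lemma cycle_pth:
  assumes "vs \<noteq> []" "\<forall>k<length vs. (vs ! k, vs ! ((k + 1) mod length vs)) \<in> prec_edges n A"
  shows "pth n A (\<lambda>k. vs ! (k mod length vs)) (length vs)"
  unfolding pth_def
proof (intro conjI allI impI)
  fix k assume "k \<le> length vs"
  have "k mod length vs < length vs" using assms(1) by simp
  then show "vs ! (k mod length vs) < n" using assms(2) by (auto simp: prec_edges_def)
next
  fix k assume "k < length vs"
  have l: "k mod length vs < length vs" using assms(1) by simp
  have "Suc k mod length vs = (k mod length vs + 1) mod length vs" by (simp add: mod_Suc_eq)
  then show "A (vs ! (k mod length vs)) (vs ! (Suc k mod length vs))"
    using assms(2) l by (auto simp: prec_edges_def)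
qed

lemma cycle_detour:
  assumes "cyc n A v" "L \<in> cycle_lengths n A (scc n A v)"
  shows "\<exists>p q. p + q \<in> CW n A v \<and> p + L + q \<in> CW n A v \<and> p + L + q \<le> 5 * n \<and> 0 < L"
proof -
  obtain vs where vs: "L = length vs" "vs \<noteq> []" "distinct vs" "set vs \<subseteq> scc n A v"
     "\<forall>k<length vs. (vs ! k, vs ! ((k + 1) mod length vs)) \<in> prec_edges n A"
    using assms(2) unfolding cycle_lengths_def by blast
  have vn: "v < n" using assms(1) by (simp add: cyc_def)
  define x where "x = vs ! 0"
  have xs: "x \<in> scc n A v" using vs(2,4) by (auto simp: x_def)
  have xn: "x < n" using vs(5) vs(2) by (auto simp: x_def prec_edges_def)
  obtain p f1 where f1: "pth n A f1 p" "f1 0 = v" "f1 p = x" "p \<le> 2 * n"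
    using short_reach[of v x n A] xs vn by (auto simp: scc_def)
  obtain q f2 where f2: "pth n A f2 q" "f2 0 = x" "f2 q = v" "q \<le> 2 * n"
    using short_reach[of x v n A] xs xn by (auto simp: scc_def)
  have cp: "pth n A (\<lambda>k. vs ! (k mod length vs)) L" using cycle_pth[OF vs(2,5)] vs(1) by simp
  have cend: "(\<lambda>k. vs ! (k mod length vs)) 0 = x" "(\<lambda>k. vs ! (k mod length vs)) L = x"
    using vs(1) by (auto simp: x_def)
  have Ln: "L \<le> n"
  proof -
    have "set vs \<subseteq> {..<n}" using vs(5) by (auto simp: in_set_conv_nth prec_edges_def)
    then have "card (set vs) \<le> n" by (metis card_lessThan card_mono finite_lessThan)
    then show ?thesis using distinct_card[OF vs(3)] vs(1) by simp
  qed
  obtain h1 where h1: "pth n A h1 (p + q)" "h1 0 = v" "h1 (p + q) = v"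
    using pth_join[OF f1(1) f2(1)] f1 f2 by auto
  obtain h2 where h2: "pth n A h2 (p + L)" "h2 0 = v" "h2 (p + L) = x"
    using pth_join[OF f1(1) cp] f1 cend by auto
  obtain h3 where h3: "pth n A h3 (p + L + q)" "h3 0 = v" "h3 (p + L + q) = v"
    using pth_join[OF h2(1) f2(1)] h2 f2 by auto
  have "p + q \<in> CW n A v" using h1 by (auto simp: CW_def)
  moreover have "p + L + q \<in> CW n A v" using h3 by (auto simp: CW_def)
  moreover have "p + L + q \<le> 5 * n" using f1(4) f2(4) Ln by simp
  moreover have "0 < L" using vs(1,2) by simp
  ultimately show ?thesis by blast
qed

lemma GV_facts:
  assumes "cyc n A v"
  shows "finite (GV n A v)" "GV n A v \<noteq> {}" "0 \<notin> GV n A v" "GV n A v \<subseteq> CW n A v"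
    "\<forall>x\<in>GV n A v. x \<le> 5 * n"
proof -
  show "finite (GV n A v)" by (rule finite_subset[of _ "{..5*n}"]) (auto simp: GV_def)
  obtain L where "L \<in> cycle_lengths n A (scc n A v)" using cyc_cycle[OF assms] by blast
  from cycle_detour[OF assms this] obtain p q where
    "p + L + q \<in> CW n A v" "p + L + q \<le> 5 * n" "0 < L" by blast
  then have "p + L + q \<in> GV n A v" by (auto simp: GV_def)
  then show "GV n A v \<noteq> {}" by blast
  show "0 \<notin> GV n A v" "GV n A v \<subseteq> CW n A v" "\<forall>x\<in>GV n A v. x \<le> 5 * n" by (auto simp: GV_def)
qed

lemma DV_pos: assumes "cyc n A v" shows "0 < DV n A v" "DV n A v \<le> 5 * n"
proof -
  obtain x where x: "x \<in> GV n A v" using GV_facts(2)[OF assms] by blast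
  have x0: "0 < x" "x \<le> 5 * n" using x by (auto simp: GV_def)
  have d: "DV n A v dvd x" using x by (simp add: DV_def)
  then have "DV n A v \<le> x" using x0(1) by (rule dvd_imp_le)
  then show "DV n A v \<le> 5 * n" using x0(2) by linarith
  show "0 < DV n A v" using d x0(1) by (cases "DV n A v = 0") auto
qed

lemma DV_dvd_cyclicity:
  assumes "cyc n A v"
  shows "DV n A v dvd cyclicity n A"
proof -
  have "DV n A v dvd L" if L: "L \<in> cycle_lengths n A (scc n A v)" for L
  proof -
    from cycle_detour[OF assms L] obtain p q where
      pq: "p + q \<in> CW n A v" "p + L + q \<in> CW n A v" "p + L + q \<le> 5 * n" "0 < L" by blast
    have d1: "DV n A v dvd p + L + q" using pq by (auto simp: DV_def GV_def)
    have d2: "DV n A v dvd p + q"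
    proof (cases "p + q = 0")
      case True then show ?thesis by simp
    next
      case False then show ?thesis using pq by (auto simp: DV_def GV_def)
    qed
    have "p + L + q = L + (p + q)" by simp
    then show ?thesis using d1 d2 by (metis dvd_add_left_iff)
  qed
  then have "DV n A v dvd Gcd (cycle_lengths n A (scc n A v))" by (simp add: Gcd_greatest)
  moreover have "Gcd (cycle_lengths n A (scc n A v)) \<in>
     {Gcd (cycle_lengths n A C) | C. C \<in> sccs n A \<and> cycle_lengths n A C \<noteq> {}}"
    using cyc_cycle[OF assms] scc_in_sccs assms by (auto simp: cyc_def)
  ultimately show ?thesis unfolding cyclicity_def by (rule dvd_trans[OF _ dvd_Lcm])
qed

lemma cyclicity_pos: "0 < cyclicity n A"
proof -
  let ?X = "{Gcd (cycle_lengths n A C) | C. C \<in> sccs n A \<and> cycle_lengths n A C \<noteq> {}}"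
  have "?X \<subseteq> (\<lambda>C. Gcd (cycle_lengths n A C)) ` sccs n A" by auto
  moreover have "finite (sccs n A)" by (simp add: sccs_def)
  ultimately have fin: "finite ?X" using finite_subset by blast
  have "0 \<notin> ?X"
  proof
    assume "0 \<in> ?X"
    then obtain C where C: "cycle_lengths n A C \<noteq> {}" "Gcd (cycle_lengths n A C) = 0" by auto
    then have "cycle_lengths n A C \<subseteq> {0}" by (simp add: Gcd_0_iff)
    moreover have "0 \<notin> cycle_lengths n A C" by (auto simp: cycle_lengths_def)
    ultimately show False using C(1) by blast
  qed
  then have "Lcm ?X \<noteq> 0" using Lcm_0_iff_nat[OF fin] by simp
  then show ?thesis unfolding cyclicity_def by simp
qed

lemma CW_multiples:
  assumes "cyc n A v" "DV n A v dvd m" "(5 * n) * (5 * n) \<le> m"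
  shows "m \<in> CW n A v"
proof (rule semigroup_bound[of "CW n A v" "GV n A v" "5 * n" m])
  show "0 \<in> CW n A v" using assms(1) CW_0 by (simp add: cyc_def)
  show "\<forall>x\<in>CW n A v. \<forall>y\<in>CW n A v. x + y \<in> CW n A v" using CW_add by blast
  show "finite (GV n A v)" "GV n A v \<noteq> {}" "GV n A v \<subseteq> CW n A v" "0 \<notin> GV n A v"
    "\<forall>x\<in>GV n A v. x \<le> 5 * n" using GV_facts[OF assms(1)] by auto
  show "Gcd (GV n A v) dvd m" using assms(2) by (simp add: DV_def)
  show "5 * n * (5 * n) \<le> m" using assms(3) .
qed



definition PP :: "nat \<Rightarrow> bmat \<Rightarrow> nat \<Rightarrow> nat \<Rightarrow> nat \<Rightarrow> bool" where
  "PP n A k i j \<longleftrightarrow> (\<exists>v g m p. cyc n A v \<and> pth n A g m \<and> g 0 = i \<and> g m = j \<and> p \<le> m \<and> g p = v \<and>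
      m \<le> 2 * n * (5 * n) \<and> m mod DV n A v = k mod DV n A v)"

lemma PP_fwd:
  assumes "pth n A f k" "n \<le> k"
  shows "PP n A k (f 0) (f k)"
proof -
  have fn: "\<forall>x\<in>{0..k}. f x < n" using assms(1) unfolding pth_def by auto
  have "card {0..k} > n * 1" using assms(2) by simp
  then obtain s t where st: "s \<in> {0..k}" "t \<in> {0..k}" "s < t" "f s = f t"
    using pigeon_pair[of "{0..k}" n 1 f] fn by auto
  have sub: "pth n A (\<lambda>x. f (s + x)) (t - s)" using pth_sub[OF assms(1), of s t] st by simp
  have "t - s \<in> CW n A (f s)" unfolding CW_def using sub st by auto
  moreover have "f s < n" using fn st by auto
  moreover have "0 < t - s" using st by simp
  ultimately have cv: "cyc n A (f s)" unfolding cyc_def by blast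
  have D: "0 < DV n A (f s)" "DV n A (f s) \<le> 5 * n" using DV_pos[OF cv] by auto
  obtain g m' p' where g: "pth n A g m'" "g 0 = f 0" "g m' = f k" "p' \<le> m'" "g p' = f s"
    "m' mod DV n A (f s) = k mod DV n A (f s)" "m' \<le> 2 * n * DV n A (f s)"
    using shorten[OF D(1) assms(1), of s] st by auto
  have "m' \<le> 2 * n * (5 * n)" using g(7) D(2) by (meson le_trans mult_le_mono2)
  then show ?thesis unfolding PP_def using cv g by blast
qed

lemma PP_bwd:
  assumes "PP n A k i j" "2 * n * (5 * n) + (5 * n) * (5 * n) \<le> k"
  shows "\<exists>f. pth n A f k \<and> f 0 = i \<and> f k = j"
proof -
  obtain v g m p where P: "cyc n A v" "pth n A g m" "g 0 = i" "g m = j" "p \<le> m" "g p = v"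
    "m \<le> 2 * n * (5 * n)" "m mod DV n A v = k mod DV n A v"
    using assms(1) unfolding PP_def by blast
  have mk: "m \<le> k" using P(7) assms(2) by linarith
  have dv: "DV n A v dvd k - m" using mod_eq_dvd_iff_nat[OF mk, of "DV n A v"] P(8) by simp
  have big: "(5 * n) * (5 * n) \<le> k - m" using P(7) assms(2) by linarith
  have "k - m \<in> CW n A v" using CW_multiples[OF P(1) dv big] .
  then obtain h where h: "pth n A h (k - m)" "h 0 = v" "h (k - m) = v" unfolding CW_def by blast
  have g1: "pth n A (\<lambda>x. g (0 + x)) (p - 0)" using pth_sub[OF P(2), of 0 p] P(5) by simp
  have g2: "pth n A (\<lambda>x. g (p + x)) (m - p)" using pth_sub[OF P(2), of p m] P(5) by simp
  obtain h1 where h1: "pth n A h1 ((p - 0) + (k - m))" "h1 0 = g 0" "h1 ((p - 0) + (k - m)) = v"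
    using pth_join[OF g1 h(1)] P(6) h by auto
  obtain h2 where h2: "pth n A h2 (((p - 0) + (k - m)) + (m - p))" "h2 0 = g 0" "h2 (((p - 0) + (k - m)) + (m - p)) = g m"
    using pth_join[OF h1(1) g2] h1 P(5,6) by auto
  have "((p - 0) + (k - m)) + (m - p) = k" using P(5) mk by simp
  then show ?thesis using h2 P(3,4) by metis
qed

lemma PP_shift:
  assumes "PP n A k i j"
  shows "PP n A (k + cyclicity n A) i j"
proof -
  obtain v g m p where P: "cyc n A v" "pth n A g m" "g 0 = i" "g m = j" "p \<le> m" "g p = v"
    "m \<le> 2 * n * (5 * n)" "m mod DV n A v = k mod DV n A v"
    using assms(1) unfolding PP_def by blast
  have "DV n A v dvd cyclicity n A" using DV_dvd_cyclicity[OF P(1)] .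
  then have "(k + cyclicity n A) mod DV n A v = k mod DV n A v" by (simp add: mod_add_eq[symmetric])
  then show ?thesis unfolding PP_def using P by metis
qed

lemma PP_unshift:
  assumes "PP n A (k + cyclicity n A) i j"
  shows "PP n A k i j"
proof -
  obtain v g m p where P: "cyc n A v" "pth n A g m" "g 0 = i" "g m = j" "p \<le> m" "g p = v"
    "m \<le> 2 * n * (5 * n)" "m mod DV n A v = (k + cyclicity n A) mod DV n A v"
    using assms(1) unfolding PP_def by blast
  have "DV n A v dvd cyclicity n A" using DV_dvd_cyclicity[OF P(1)] .
  then have "(k + cyclicity n A) mod DV n A v = k mod DV n A v" by (simp add: mod_add_eq[symmetric])
  then show ?thesis unfolding PP_def using P by metis
qed

definition K0 :: "nat \<Rightarrow> nat" where "K0 n = 2 * n * (5 * n) + (5 * n) * (5 * n)"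

lemma bpow_period:
  assumes "bnd n A" "K0 n \<le> k"
  shows "bpow n A (k + cyclicity n A) = bpow n A k"
proof (intro ext)
  fix i j
  have nk: "n \<le> k"
  proof (cases n)
    case 0 then show ?thesis by simp
  next
    case (Suc n') then have "n \<le> n * n" by simp
    also have "\<dots> \<le> K0 n" by (simp add: K0_def)
    finally show ?thesis using assms(2) by linarith
  qed
  have K: "2 * n * (5 * n) + (5 * n) * (5 * n) \<le> k" using assms(2) by (simp add: K0_def)
  have "bpow n A (k + cyclicity n A) i j \<longleftrightarrow> PP n A (k + cyclicity n A) i j"
  proof
    assume "bpow n A (k + cyclicity n A) i j"
    then obtain f where "pth n A f (k + cyclicity n A)" "f 0 = i" "f (k + cyclicity n A) = j"
      using bpow_pth[OF assms(1)] by blast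
    then show "PP n A (k + cyclicity n A) i j" using PP_fwd[of n A f] nk by fastforce
  next
    assume "PP n A (k + cyclicity n A) i j"
    then show "bpow n A (k + cyclicity n A) i j" using PP_bwd[of n A _ i j] K bpow_pth[OF assms(1)] by auto
  qed
  also have "\<dots> \<longleftrightarrow> PP n A k i j" using PP_shift PP_unshift by blast
  also have "\<dots> \<longleftrightarrow> bpow n A k i j"
  proof
    assume "PP n A k i j"
    then show "bpow n A k i j" using PP_bwd[of n A k i j] K bpow_pth[OF assms(1)] by auto
  next
    assume "bpow n A k i j"
    then obtain f where "pth n A f k" "f 0 = i" "f k = j" using bpow_pth[OF assms(1)] by blast
    then show "PP n A k i j" using PP_fwd[of n A f k] nk by fastforce
  qed
  finally show "bpow n A (k + cyclicity n A) i j = bpow n A k i j" by simp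
qed

lemma bmonoid_single: "bmonoid n {A} = range (bpow n A)"
proof
  show "bmonoid n {A} \<subseteq> range (bpow n A)"
  proof
    fix X assume "X \<in> bmonoid n {A}"
    then show "X \<in> range (bpow n A)"
    proof (induction rule: bmonoid.induct)
      case unit then show ?case by (metis bpow_0 rangeI)
    next
      case (step X g)
      then obtain m where "X = bpow n A m" by auto
      then have "bmult n X g = bpow n A (Suc m)" using step by (simp add: bpow_Suc)
      then show ?case by simp
    qed
  qed
  show "range (bpow n A) \<subseteq> bmonoid n {A}"
  proof
    fix X assume "X \<in> range (bpow n A)"
    then obtain m where X: "X = bpow n A m" by auto
    have "bpow n A m \<in> bmonoid n {A}"
    proof (induction m)
      case 0 then show ?case by (simp add: bpow_0 bmonoid.unit)
    next
      case (Suc m) then show ?case by (simp add: bpow_Suc bmonoid.step)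
    qed
    then show "X \<in> bmonoid n {A}" using X by simp
  qed
qed

lemma card_bmonoid_single:
  assumes "bnd n A"
  shows "card (bmonoid n {A}) \<le> K0 n + cyclicity n A"
proof -
  let ?c = "cyclicity n A"
  have c0: "0 < ?c" by (rule cyclicity_pos)
  have "\<forall>m. bpow n A m \<in> bpow n A ` {..<K0 n + ?c}"
  proof
    fix m show "bpow n A m \<in> bpow n A ` {..<K0 n + ?c}"
    proof (induction m rule: less_induct)
      case (less m)
      show ?case
      proof (cases "m < K0 n + ?c")
        case True then show ?thesis by simp
      next
        case False
        then have "K0 n \<le> m - ?c" "m - ?c < m" "m - ?c + ?c = m" using c0 by auto
        then have "bpow n A m = bpow n A (m - ?c)" using bpow_period[OF assms, of "m - ?c"] by metis
        then show ?thesis using less.IH[OF \<open>m - ?c < m\<close>] by simp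
      qed
    qed
  qed
  then have "range (bpow n A) \<subseteq> bpow n A ` {..<K0 n + ?c}" by blast
  then have "card (range (bpow n A)) \<le> card (bpow n A ` {..<K0 n + ?c})"
    by (rule card_mono[rotated]) simp
  also have "\<dots> \<le> K0 n + ?c" using card_image_le[of "{..<K0 n + ?c}" "bpow n A"] by simp
  finally show ?thesis using bmonoid_single by metis
qed



definition b2 :: "bool \<Rightarrow> bit" where "b2 x = (if x then 1 else 0)"

lemma rank_basis:
  "\<exists>J. J \<subseteq> {..<n} \<and> card J = rank_F2 n T \<and>
     (\<forall>j<n. \<exists>\<mu>. \<forall>i<n. b2 (T i j) = (\<Sum>l\<in>J. \<mu> l * b2 (T i l)))"
proof -
  interpret vs: vec_space "TYPE(bit)" n .
  define M where "M = to_F2_mat n T"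
  have M: "M \<in> carrier_mat n n" by (simp add: M_def to_F2_mat_def)
  have Mij: "\<And>i j. i < n \<Longrightarrow> j < n \<Longrightarrow> col M j $ i = b2 (T i j)"
    by (simp add: M_def to_F2_mat_def b2_def)
  define P where "P = (\<lambda>S. S \<subseteq> set (cols M) \<and> vs.lin_indpt S)"
  have li0: "vs.lin_indpt {}"
    by (metis (no_types) empty_subsetI vs.fin_dim vs.finite_basis_exists vs.subset_li_is_li vec_vs vectorspace.basis_def)
  have P0: "P {}" using li0 by (simp add: P_def)
  obtain S where S: "finite S" "maximal S P"
    using maximal_exists_superset[of "set (cols M)" P "{}"] P0 by (auto simp: P_def)
  have rk: "rank_F2 n T = card S" unfolding rank_F2_def M_def[symmetric]
    using vs.rank_card_indpt[OF M] S(2) by (simp add: P_def)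
  have Ssub: "S \<subseteq> set (cols M)" "vs.lin_indpt S" using S(2) by (auto simp: maximal_def P_def)
  have colsC: "set (cols M) \<subseteq> carrier_vec n" using M cols_dim by (metis carrier_matD(1))
  have SC: "S \<subseteq> carrier_vec n" using Ssub colsC by blast
  have span: "c \<in> vs.span S" if c: "c \<in> set (cols M)" for c
  proof (cases "c \<in> S")
    case True then show ?thesis using vs.in_own_span[OF SC] by blast
  next
    case False
    show ?thesis
    proof (rule ccontr)
      assume "c \<notin> vs.span S"
      then have "vs.lin_indpt (S \<union> {c})"
        using vs.lin_dep_iff_in_span[OF SC Ssub(2) _ False] c colsC by auto
      then have "P (S \<union> {c})" using Ssub c by (simp add: P_def)
      then have "S \<union> {c} = S" using S(2) unfolding maximal_def by blast
      then show False using False by blast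
    qed
  qed
  define idx where "idx = (\<lambda>x. SOME j. j < n \<and> x = col M j)"
  have idx: "idx x < n \<and> x = col M (idx x)" if "x \<in> S" for x
  proof -
    have "x \<in> set (cols M)" using that Ssub by blast
    then obtain j where "j < n" "x = col M j" using M by (auto simp: in_set_conv_nth)
    then show ?thesis unfolding idx_def using someI[of "\<lambda>j. j < n \<and> x = col M j" j] by blast
  qed
  have inj: "inj_on idx S" by (metis idx inj_onI)
  define J where "J = idx ` S"
  have J1: "J \<subseteq> {..<n}" using idx by (auto simp: J_def)
  have J2: "card J = rank_F2 n T" using rk inj by (simp add: J_def card_image)
  have J3: "\<exists>\<mu>. \<forall>i<n. b2 (T i j) = (\<Sum>l\<in>J. \<mu> l * b2 (T i l))" if j: "j < n" for j
  proof -
    have cj: "col M j \<in> set (cols M)" using j M by (auto simp: in_set_conv_nth intro: exI[of _ j])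
    obtain a where a: "vs.lincomb a S = col M j"
      using vs.finite_in_span[OF S(1) _ span[OF cj]] SC by auto
    show ?thesis
    proof (intro exI[of _ "\<lambda>l. a (col M l)"] allI impI)
      fix i assume i: "i < n"
      have "b2 (T i j) = col M j $ i" using Mij i j by simp
      also have "\<dots> = (\<Sum>x\<in>S. a x * x $ i)" unfolding a[symmetric] by (rule vs.lincomb_index[OF i SC])
      also have "\<dots> = (\<Sum>x\<in>S. a (col M (idx x)) * col M (idx x) $ i)"
        by (rule sum.cong[OF refl]) (metis idx)
      also have "\<dots> = (\<Sum>l\<in>J. a (col M l) * col M l $ i)"
        unfolding J_def by (rule sum.reindex[OF inj, symmetric, unfolded comp_def])
      also have "\<dots> = (\<Sum>l\<in>J. a (col M l) * b2 (T i l))"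
        by (rule sum.cong[OF refl]) (use J1 Mij i in auto)
      finally show "b2 (T i j) = (\<Sum>l\<in>J. a (col M l) * b2 (T i l))" .
    qed
  qed
  show ?thesis using J1 J2 J3 by blast
qed



lemma sum_symdiff_bit:
  fixes g :: "nat \<Rightarrow> bit"
  assumes "finite X" "finite Y"
  shows "(\<Sum>k\<in>X. g k) + (\<Sum>k\<in>Y. g k) = (\<Sum>k\<in>(X - Y) \<union> (Y - X). g k)"
proof -
  have x: "(\<Sum>k\<in>X. g k) = (\<Sum>k\<in>X - Y. g k) + (\<Sum>k\<in>X \<inter> Y. g k)"
    using assms(1) by (metis add.commute sum.Int_Diff)
  have y: "(\<Sum>k\<in>Y. g k) = (\<Sum>k\<in>Y - X. g k) + (\<Sum>k\<in>X \<inter> Y. g k)"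
    using assms(2) by (metis add.commute sum.Int_Diff Int_commute)
  have u: "(\<Sum>k\<in>(X - Y) \<union> (Y - X). g k) = (\<Sum>k\<in>X - Y. g k) + (\<Sum>k\<in>Y - X. g k)"
    using assms by (intro sum.union_disjoint) auto
  have "(\<Sum>k\<in>X. g k) + (\<Sum>k\<in>Y. g k) =
     (\<Sum>k\<in>X - Y. g k) + (\<Sum>k\<in>Y - X. g k) + ((\<Sum>k\<in>X \<inter> Y. g k) + (\<Sum>k\<in>X \<inter> Y. g k))"
    unfolding x y by (simp only: add_ac)
  also have "\<dots> = (\<Sum>k\<in>X - Y. g k) + (\<Sum>k\<in>Y - X. g k)" by (simp only: bit_add_self add_0_right)
  finally show ?thesis using u by simp
qed

definition rowJ :: "bmat \<Rightarrow> nat set \<Rightarrow> nat \<Rightarrow> nat \<Rightarrow> bit" where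
  "rowJ T J i = (\<lambda>l. if l \<in> J then b2 (T i l) else 0)"

definition SP :: "bmat \<Rightarrow> nat set \<Rightarrow> nat set \<Rightarrow> (nat \<Rightarrow> bit) set" where
  "SP T J Z = {(\<lambda>l. \<Sum>k\<in>X. rowJ T J k l) | X. X \<subseteq> Z}"

lemma subsp_SP:
  assumes "finite Z"
  shows "subsp J (SP T J Z)"
  unfolding subsp_def
proof (intro conjI)
  show "vzero \<in> SP T J Z" unfolding SP_def vzero_def by (intro CollectI exI[of _ "{}"]) simp
  show "\<forall>x\<in>SP T J Z. \<forall>y\<in>SP T J Z. vadd x y \<in> SP T J Z"
  proof (intro ballI)
    fix x y assume "x \<in> SP T J Z" "y \<in> SP T J Z"
    then obtain X Y where X: "X \<subseteq> Z" "x = (\<lambda>l. \<Sum>k\<in>X. rowJ T J k l)"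
      and Y: "Y \<subseteq> Z" "y = (\<lambda>l. \<Sum>k\<in>Y. rowJ T J k l)" unfolding SP_def by blast
    have fX: "finite X" "finite Y" using X(1) Y(1) assms finite_subset by auto
    have "vadd x y = (\<lambda>l. \<Sum>k\<in>(X - Y) \<union> (Y - X). rowJ T J k l)"
      unfolding vadd_def X(2) Y(2) using sum_symdiff_bit[OF fX] by simp
    moreover have "(X - Y) \<union> (Y - X) \<subseteq> Z" using X(1) Y(1) by auto
    ultimately show "vadd x y \<in> SP T J Z" unfolding SP_def by blast
  qed
  show "SP T J Z \<subseteq> FS J"
    unfolding SP_def FS_def rowJ_def by auto
qed

lemma card_brange:
  assumes bnd: "\<And>i j. T i j \<Longrightarrow> i < n \<and> j < n"
  shows "card (brange n T) \<le> (\<Sum>k\<le>rank_F2 n T. 2 ^ (k * (rank_F2 n T - k) + rank_F2 n T))"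
proof -
  obtain J where J: "J \<subseteq> {..<n}" "card J = rank_F2 n T"
    "\<And>j. j < n \<Longrightarrow> \<exists>\<mu>. \<forall>i<n. b2 (T i j) = (\<Sum>l\<in>J. \<mu> l * b2 (T i l))"
    using rank_basis[of n T] by blast
  have finJ: "finite J" using J(1) finite_subset by blast
  define Z where "Z = (\<lambda>U::nat\<Rightarrow>bool. {i. i < n \<and> \<not> U i})"
  define \<Phi> where "\<Phi> = (\<lambda>U. SP T J (Z U))"
  have Un: "U i \<Longrightarrow> i < n" if "U \<in> brange n T" for U i
    using that bnd unfolding brange_def by auto
  have Zchar: "Z U = {i. i < n \<and> rowJ T J i \<in> \<Phi> U}" if U: "U \<in> brange n T" for U
  proof
    show "Z U \<subseteq> {i. i < n \<and> rowJ T J i \<in> \<Phi> U}"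
    proof
      fix i assume i: "i \<in> Z U"
      have "rowJ T J i = (\<lambda>l. \<Sum>k\<in>{i}. rowJ T J k l)"
        by (rule ext) (metis add_0_right empty_iff finite.emptyI sum.empty sum.insert)
      then have "rowJ T J i \<in> \<Phi> U" unfolding \<Phi>_def SP_def using i by blast
      then show "i \<in> {i. i < n \<and> rowJ T J i \<in> \<Phi> U}" using i by (simp add: Z_def)
    qed
    show "{i. i < n \<and> rowJ T J i \<in> \<Phi> U} \<subseteq> Z U"
    proof
      fix i assume i: "i \<in> {i. i < n \<and> rowJ T J i \<in> \<Phi> U}"
      then obtain X where X: "X \<subseteq> Z U" "rowJ T J i = (\<lambda>l. \<Sum>k\<in>X. rowJ T J k l)"
        unfolding \<Phi>_def SP_def by blast
      obtain v where v: "U = (\<lambda>i. \<exists>j<n. T i j \<and> v j)" using U unfolding brange_def by blast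
      show "i \<in> Z U"
      proof (rule ccontr)
        assume "i \<notin> Z U"
        then have "U i" using i by (simp add: Z_def)
        then obtain j where j: "j < n" "T i j" "v j" using v by auto
        obtain \<mu> where \<mu>: "\<forall>i<n. b2 (T i j) = (\<Sum>l\<in>J. \<mu> l * b2 (T i l))" using J(3)[OF j(1)] by blast
        have XZ: "\<And>k. k \<in> X \<Longrightarrow> k < n \<and> \<not> T k j"
          using X(1) j v unfolding Z_def by auto
        have finX: "finite X" using X(1) unfolding Z_def by (metis (no_types, lifting) finite_nat_set_iff_bounded mem_Collect_eq subset_eq)
        have "b2 (T i j) = (\<Sum>l\<in>J. \<mu> l * rowJ T J i l)"
          using \<mu> i by (auto simp: rowJ_def intro!: sum.cong)
        also have "\<dots> = (\<Sum>l\<in>J. \<mu> l * (\<Sum>k\<in>X. rowJ T J k l))" using X(2) by (metis (no_types))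
        also have "\<dots> = (\<Sum>l\<in>J. \<Sum>k\<in>X. \<mu> l * rowJ T J k l)" by (simp only: sum_distrib_left)
        also have "\<dots> = (\<Sum>k\<in>X. \<Sum>l\<in>J. \<mu> l * rowJ T J k l)" by (rule sum.swap)
        also have "\<dots> = (\<Sum>k\<in>X. b2 (T k j))"
        proof (rule sum.cong[OF refl])
          fix k assume "k \<in> X"
          then have "k < n" using XZ by blast
          then show "(\<Sum>l\<in>J. \<mu> l * rowJ T J k l) = b2 (T k j)" using \<mu> by (auto simp: rowJ_def intro!: sum.cong)
        qed
        also have "\<dots> = 0" using XZ by (simp add: b2_def)
        finally show False using j(2) by (simp add: b2_def)
      qed
    qed
  qed
  have inj: "inj_on \<Phi> (brange n T)"
  proof (rule inj_onI)
    fix U U' assume U: "U \<in> brange n T" and U': "U' \<in> brange n T" and e: "\<Phi> U = \<Phi> U'"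
    have "Z U = Z U'" using Zchar[OF U] Zchar[OF U'] e by simp
    then have "\<And>i. U i = U' i" using Un[OF U] Un[OF U'] unfolding Z_def by blast
    then show "U = U'" by blast
  qed
  have finZ: "finite (Z U)" for U unfolding Z_def by simp
  have sub: "\<Phi> ` brange n T \<subseteq> (\<Union>k\<in>{..card J}. SubK J k)"
  proof
    fix W assume "W \<in> \<Phi> ` brange n T"
    then obtain U where "W = \<Phi> U" by blast
    then have sW: "subsp J W" using subsp_SP[OF finZ] by (simp add: \<Phi>_def)
    then obtain k where "k \<le> card J" "card W = 2 ^ k" using subsp_card[OF finJ] by blast
    then show "W \<in> (\<Union>k\<in>{..card J}. SubK J k)" using sW by (auto simp: SubK_def)
  qed
  have finU: "finite (\<Union>k\<in>{..card J}. SubK J k)" using finite_SubK[OF finJ] by simp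
  have "card (brange n T) = card (\<Phi> ` brange n T)" using inj by (simp add: card_image)
  also have "\<dots> \<le> card (\<Union>k\<in>{..card J}. SubK J k)" using sub finU by (rule card_mono[rotated])
  also have "\<dots> \<le> (\<Sum>k\<le>card J. card (SubK J k))" by (rule card_UN_le) simp
  also have "\<dots> \<le> (\<Sum>k\<le>card J. 2 ^ (k * (card J - k) + card J))"
    by (rule sum_mono) (simp add: SubK_bound[OF finJ])
  finally show ?thesis using J(2) by simp
qed


lemma real_sq_bound:
  fixes k r :: nat
  assumes "k \<le> r"
  shows "real (k * (r - k)) \<le> real r ^ 2 / 4"
proof -
  have "real (k * (r - k)) = real k * (real r - real k)" using assms by (simp add: of_nat_diff)
  moreover have "0 \<le> (real r - 2 * real k) ^ 2" by simp
  ultimately show ?thesis by (simp add: power2_eq_square algebra_simps)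
qed

lemma range_bound_real:
  fixes \<epsilon> :: real and r :: nat
  assumes "0 < \<epsilon>" "\<epsilon> < 4"
  defines "\<delta> \<equiv> 1 / (4 - \<epsilon>) - 1 / 4"
  shows "real (\<Sum>k\<le>r. 2 ^ (k * (r - k) + r) :: nat) \<le> 2 powr (1 / \<delta>) * 2 powr (real r ^ 2 / (4 - \<epsilon>))"
proof -
  have d0: "0 < \<delta>" unfolding \<delta>_def using assms(1,2) by (simp add: field_simps)
  have trm: "real (2 ^ (k * (r - k) + r) :: nat) \<le> 2 powr (real r ^ 2 / 4 + real r)" if k: "k \<in> {..r}" for k
  proof -
    have "real (2 ^ (k * (r - k) + r) :: nat) = (2::real) ^ (k * (r - k) + r)" by (simp only: of_nat_power of_nat_numeral)
    also have "\<dots> = 2 powr real (k * (r - k) + r)" by (rule powr_realpow[symmetric]) simp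
    also have "\<dots> \<le> 2 powr (real r ^ 2 / 4 + real r)"
      using real_sq_bound[of k r] k by (intro powr_mono) auto
    finally show ?thesis .
  qed
  have "real (\<Sum>k\<le>r. 2 ^ (k * (r - k) + r) :: nat) = (\<Sum>k\<le>r. real (2 ^ (k * (r - k) + r) :: nat))"
    by (simp only: of_nat_sum)
  also have "\<dots> \<le> (\<Sum>k\<le>r. 2 powr (real r ^ 2 / 4 + real r))" by (rule sum_mono) (rule trm)
  also have "\<dots> = real (Suc r) * 2 powr (real r ^ 2 / 4 + real r)" by simp
  also have "\<dots> \<le> 2 powr real r * 2 powr (real r ^ 2 / 4 + real r)"
  proof (rule mult_right_mono)
    have "Suc r \<le> 2 ^ r" by (simp add: Suc_leI less_exp)
    then have "real (Suc r) \<le> real (2 ^ r :: nat)" by (simp only: of_nat_le_iff)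
    also have "real (2 ^ r :: nat) = (2::real) ^ r" by (simp only: of_nat_power of_nat_numeral)
    also have "\<dots> = 2 powr real r" by (rule powr_realpow[symmetric]) simp
    finally show "real (Suc r) \<le> 2 powr real r" .
  qed simp
  also have "\<dots> = 2 powr (real r ^ 2 / 4 + 2 * real r)" by (simp add: powr_add[symmetric] algebra_simps)
  also have "\<dots> \<le> 2 powr (1 / \<delta> + real r ^ 2 / (4 - \<epsilon>))"
  proof (rule powr_mono)
    have "0 \<le> (\<delta> * real r - 1) ^ 2" by simp
    then have "0 \<le> (\<delta> * real r) ^ 2 + 1 - 2 * (\<delta> * real r)" unfolding power2_diff by simp
    then have h: "\<delta> * (2 * real r) \<le> (\<delta> * real r) ^ 2 + 1" by simp
    have h2: "\<delta> * (\<delta> * real r ^ 2 + 1 / \<delta>) = (\<delta> * real r) ^ 2 + 1"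
      using d0 by (simp add: field_simps power2_eq_square)
    have "\<delta> * (2 * real r) \<le> \<delta> * (\<delta> * real r ^ 2 + 1 / \<delta>)" using h h2 by simp
    then have "2 * real r \<le> \<delta> * real r ^ 2 + 1 / \<delta>" using d0 by simp
    then have "0 \<le> \<delta> * real r ^ 2 - 2 * real r + 1 / \<delta>" by simp
    moreover have "real r ^ 2 / (4 - \<epsilon>) = real r ^ 2 / 4 + \<delta> * real r ^ 2"
      unfolding \<delta>_def using assms(2) by (simp add: field_simps)
    ultimately show "real r ^ 2 / 4 + 2 * real r \<le> 1 / \<delta> + real r ^ 2 / (4 - \<epsilon>)" by linarith
  qed simp
  also have "\<dots> = 2 powr (1 / \<delta>) * 2 powr (real r ^ 2 / (4 - \<epsilon>))" by (simp add: powr_add)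
  finally show ?thesis .
qed

theorem proposition3:
  fixes \<epsilon> :: real
  assumes "0 < \<epsilon>" and "\<epsilon> < 4"
  shows "\<exists>C::real. \<forall>(n::nat) (\<Sigma>::nat set) I F \<delta> a.
           nfa n \<Sigma> I F \<delta> \<longrightarrow> a \<in> \<Sigma> \<longrightarrow>
           real (subset_complexity n \<Sigma> \<delta>)
             \<le> C * real (card \<Sigma>) * real (cyclicity n (trans_mat \<delta> a) + n ^ 2)
                 * Max (insert 1 ((\<lambda>b. 2 powr (real (rank_F2 n (trans_mat \<delta> b)) ^ 2 / (4 - \<epsilon>)))
                                   ` (\<Sigma> - {a})))"
proof -
  define dl where "dl = 1 / (4 - \<epsilon>) - 1 / 4"
  define C1 where "C1 = (2::real) powr (1 / dl)"
  have dl0: "0 < dl" unfolding dl_def using assms by (simp add: field_simps)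
  have C1: "1 \<le> C1" unfolding C1_def using dl0 by (intro ge_one_powr_ge_zero) auto
  have main: "real (subset_complexity n Sig dlt)
             \<le> (35 * C1) * real (card Sig) * real (cyclicity n (trans_mat dlt a) + n ^ 2)
                 * Max (insert 1 ((\<lambda>b. 2 powr (real (rank_F2 n (trans_mat dlt b)) ^ 2 / (4 - \<epsilon>)))
                                   ` (Sig - {a})))"
    if nfa: "nfa n Sig I F dlt" and a: "a \<in> Sig"
    for n :: nat and Sig :: "nat set" and I F :: "nat set" and dlt :: "(nat \<times> nat \<times> nat) set" and a :: nat
  proof -
    have finS: "finite Sig" and dsub: "dlt \<subseteq> {..<n} \<times> Sig \<times> {..<n}" using nfa by (auto simp: nfa_def)
    have bndw: "\<And>i j. trans_mat dlt w i j \<Longrightarrow> i < n \<and> j < n" for w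
      using dsub by (auto simp: trans_mat_def)
    define g where "g = (\<lambda>b. (2::real) powr (real (rank_F2 n (trans_mat dlt b)) ^ 2 / (4 - \<epsilon>)))"
    define Mx where "Mx = Max (insert 1 (g ` (Sig - {a})))"
    have finM: "finite (insert 1 (g ` (Sig - {a})))" using finS by simp
    have Mx1: "1 \<le> Mx" unfolding Mx_def using finM by (intro Max_ge) auto
    have Mxg: "g b \<le> Mx" if "b \<in> Sig - {a}" for b unfolding Mx_def using finM that by (intro Max_ge) auto
    have R: "real (card (brange n (trans_mat dlt b))) \<le> C1 * Mx" if b: "b \<in> Sig - {a}" for b
    proof -
      let ?r = "rank_F2 n (trans_mat dlt b)"
      have "card (brange n (trans_mat dlt b)) \<le> (\<Sum>k\<le>?r. 2 ^ (k * (?r - k) + ?r))"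
        using card_brange[of "trans_mat dlt b" n] bndw by blast
      then have "real (card (brange n (trans_mat dlt b))) \<le> real (\<Sum>k\<le>?r. 2 ^ (k * (?r - k) + ?r) :: nat)"
        by (simp only: of_nat_le_iff)
      also have "\<dots> \<le> C1 * g b" unfolding C1_def g_def dl_def using range_bound_real[OF assms] by simp
      also have "\<dots> \<le> C1 * Mx" using Mxg[OF b] C1 by simp
      finally show ?thesis .
    qed
    have "0 < card Sig" using a finS by (auto simp: card_gt_0_iff)
    then have cardS: "1 \<le> card Sig" by simp
    have cardSa: "card (Sig - {a}) = card Sig - 1" using a finS by simp
    have sumR: "real (\<Sum>w\<in>Sig - {a}. card (brange n (trans_mat dlt w))) \<le> (real (card Sig) - 1) * (C1 * Mx)"
    proof -
      have "real (\<Sum>w\<in>Sig - {a}. card (brange n (trans_mat dlt w))) = (\<Sum>w\<in>Sig - {a}. real (card (brange n (trans_mat dlt w))))"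
        by (simp only: of_nat_sum)
      also have "\<dots> \<le> (\<Sum>w\<in>Sig - {a}. C1 * Mx)" by (rule sum_mono) (rule R)
      also have "\<dots> = real (card (Sig - {a})) * (C1 * Mx)" by simp
      also have "\<dots> = (real (card Sig) - 1) * (C1 * Mx)" using cardSa cardS by (simp add: of_nat_diff)
      finally show ?thesis .
    qed
    have first: "real (1 + (\<Sum>w\<in>Sig - {a}. card (brange n (trans_mat dlt w)))) \<le> real (card Sig) * C1 * Mx"
    proof -
      define X where "X = C1 * Mx"
      have "1 * 1 \<le> C1 * Mx" by (rule mult_mono) (use C1 Mx1 in auto)
      then have X1: "1 \<le> X" by (simp add: X_def)
      have e1: "real (1 + (\<Sum>w\<in>Sig - {a}. card (brange n (trans_mat dlt w)))) =
          1 + real (\<Sum>w\<in>Sig - {a}. card (brange n (trans_mat dlt w)))" by (simp only: of_nat_add of_nat_1)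
      have e2: "(real (card Sig) - 1) * X = real (card Sig) * X - X" by (simp add: algebra_simps)
      have e3: "real (card Sig) * C1 * Mx = real (card Sig) * X" by (simp add: X_def mult.assoc)
      show ?thesis using sumR X1 e1 e2 e3 unfolding X_def[symmetric] by linarith
    qed
    have bndA: "bnd n (trans_mat dlt a)" unfolding bnd_def using bndw by blast
    have M: "card (bmonoid n (trans_mat dlt ` {a})) \<le> K0 n + cyclicity n (trans_mat dlt a)"
      using card_bmonoid_single[OF bndA] by simp
    have M': "real (card (bmonoid n (trans_mat dlt ` {a}))) \<le> 35 * real (cyclicity n (trans_mat dlt a) + n ^ 2)"
    proof -
      have "K0 n = 35 * n ^ 2" by (simp add: K0_def power2_eq_square)
      then have "K0 n + cyclicity n (trans_mat dlt a) \<le> 35 * (cyclicity n (trans_mat dlt a) + n ^ 2)" by simp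
      then have "K0 n + cyclicity n (trans_mat dlt a) \<le> 35 * (cyclicity n (trans_mat dlt a) + n ^ 2)" by simp
      with M have "card (bmonoid n (trans_mat dlt ` {a})) \<le> 35 * (cyclicity n (trans_mat dlt a) + n ^ 2)"
        by (rule le_trans)
      then have "real (card (bmonoid n (trans_mat dlt ` {a}))) \<le> real (35 * (cyclicity n (trans_mat dlt a) + n ^ 2))"
        by (simp only: of_nat_le_iff)
      then show ?thesis by simp
    qed
    define f where "f = (\<lambda>J. (1 + (\<Sum>w\<in>Sig - J. card (brange n (trans_mat dlt w))))
                 * card (bmonoid n (trans_mat dlt ` J)))"
    have SC: "subset_complexity n Sig dlt \<le> f {a}"
    proof -
      have "subset_complexity n Sig dlt = Min (f ` Pow Sig)" unfolding subset_complexity_def f_def ..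
      also have "\<dots> \<le> f {a}" using finS a by (intro Min_le) auto
      finally show ?thesis .
    qed
    have "real (subset_complexity n Sig dlt) \<le> real (f {a})" using SC by (simp only: of_nat_le_iff)
    also have "\<dots> = real (1 + (\<Sum>w\<in>Sig - {a}. card (brange n (trans_mat dlt w)))) *
        real (card (bmonoid n (trans_mat dlt ` {a})))" by (simp only: f_def of_nat_mult)
    also have "\<dots> \<le> (real (card Sig) * C1 * Mx) * (35 * real (cyclicity n (trans_mat dlt a) + n ^ 2))"
      using first M' by (intro mult_mono) (use C1 Mx1 in auto)
    also have "\<dots> = (35 * C1) * real (card Sig) * real (cyclicity n (trans_mat dlt a) + n ^ 2) * Mx"
      by (simp add: algebra_simps)
    finally show ?thesis unfolding Mx_def g_def .
  qed
  show ?thesis by (intro exI[of _ "35 * C1"] allI impI) (rule main)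
qed

end
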